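(* Consider the networked feedback system described in the context and suppose it is mean-square input-output stable. Then $$\sum_{k=0}^{\infty}\hat{\mathcal S}(k)=\frac{1}{1-\|\Phi(z)G(z)\|_2^2}\quad\text{and}\quad \|\Phi(z)G(z)\|_2<1.$$
   Context: Setting: $P$ is a SISO discrete-time LTI plant, strictly proper (relative degree $\ge1$), $K$ a proper SISO LTI controller. Let $\tau\ge0$ be an integer, $\mathcal D=\{0,\dots,\tau\}$, $\{\tau_n\}$ i.i.d. with values in $\mathcal D$, $\Pr\{\tau_n=i\}=p_i$, $\sum_ip_i=1$. With real weights $\alpha_i$ and Kronecker delta $\delta$, the channel maps $u$ to $u_d(k)=\sum_{i=0}^{\tau}\alpha_i\delta(\tau_{k-i}-i)u(k-i)$. Closed loop: plant input $v-u_d$, plant output $y$, $u=Ky$; signals real, system at rest at $k=0$. Mean channel $H(z)=\sum_{i=0}^\tau\alpha_ip_iz^{-i}$. Let $\omega(k,n)=\alpha_{k-n}[\delta(\tau_n-(k-n))-p_{k-n}]$ for $n\le k\le n+\tau$, $0$ otherwise, and $d(k)=\sum_{i=0}^\tau\omega(k,k-i)u(k-i)$. Nominal system $G(z)=P(z)K(z)[1+P(z)K(z)H(z)]^{-1}$ with impulse response $g$ ($g(j)=0$ for $j\le0$); then $u(k)=\sum_{n=0}^kg(n)[v(k-n)-d(k-n)]$. Input assumption: $\{\tau_n\}$ independent of $\{v(k)\}$, $v$ zero-mean white noise with bounded variances. Mean-square input-output stable: $G$ stable (poles in open unit disc) and for every such $v$, $\mathbb E\{d^2(k)\}$ and $\mathbb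 E\{u^2(k)\}$ are bounded sequences. $\Phi(z)$ is a minimum-phase polynomial in $z^{-1}$ of degree $\tau$ with real coefficients such that $\Phi(z^{-1})\Phi(z)=\frac12\sum_{i_1,i_2=0}^{\tau}(\alpha_{i_1}z^{i_1}-\alpha_{i_2}z^{i_2})(\alpha_{i_1}z^{-i_1}-\alpha_{i_2}z^{-i_2})p_{i_1}p_{i_2}$. $\|F\|_2^2=\frac1{2\pi}\int_{-\pi}^{\pi}|F(e^{j\theta})|^2d\theta$. Define $\hat{\mathcal T}(m)=\frac12\sum_{i_1,i_2=0}^{\tau}[g(m-i_1)\alpha_{i_1}-g(m-i_2)\alpha_{i_2}]^2p_{i_1}p_{i_2}$ for $m\ge0$, $\hat{\mathcal S}(0)=1$ and $\hat{\mathcal S}(m)=\sum_{n=0}^{m-1}\hat{\mathcal S}(n)\hat{\mathcal T}(m-n)$ for $m\ge1$. *)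

theory Defs
  imports "HOL-Analysis.Analysis" "HOL-Probability.Probability"
    "HOL-Computational_Algebra.Polynomial"
begin

definition tf :: "real poly \<Rightarrow> real poly \<Rightarrow> complex \<Rightarrow> complex" where
  "tf num den z = poly (map_poly complex_of_real num) z / poly (map_poly complex_of_real den) z"

definition mean_channel :: "nat \<Rightarrow> (nat \<Rightarrow> real) \<Rightarrow> (nat \<Rightarrow> real) \<Rightarrow> complex \<Rightarrow> complex" where
  "mean_channel tmax \<alpha> p z = (\<Sum>i\<le>tmax. complex_of_real (\<alpha> i * p i) * inverse z ^ i)"

definition nominal :: "(complex \<Rightarrow> complex) \<Rightarrow> (complex \<Rightarrow> complex) \<Rightarrow> (complex \<Rightarrow> complex)
    \<Rightarrow> complex \<Rightarrow> complex" where
  "nominal P K H z = P z * K z / (1 + P z * K z * H z)"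

definition impulse_response :: "(complex \<Rightarrow> complex) \<Rightarrow> (nat \<Rightarrow> real) \<Rightarrow> bool" where
  "impulse_response F g \<longleftrightarrow>
     (\<exists>R. \<forall>z. R < cmod z \<longrightarrow> (\<lambda>j. complex_of_real (g j) * inverse z ^ j) sums F z)"

(* F is a stable rational transfer function: up to finitely many points (removable
   singularities / cancelled factors) it equals a proper rational function N/D whose
   poles all lie in the open unit disc *)
definition stable_tf :: "(complex \<Rightarrow> complex) \<Rightarrow> bool" where
  "stable_tf F \<longleftrightarrow> (\<exists>N D :: complex poly. D \<noteq> 0 \<and> degree N \<le> degree D \<and>
       (\<forall>z. 1 \<le> cmod z \<longrightarrow> poly D z \<noteq> 0) \<and>
       finite {z. F z \<noteq> poly N z / poly D z})"

definition h2norm :: "(complex \<Rightarrow> complex) \<Rightarrow> real" where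
  "h2norm F = sqrt (1 / (2 * pi) * integral {-pi..pi} (\<lambda>\<theta>. (cmod (F (cis \<theta>)))\<^sup>2))"

definition omega :: "nat \<Rightarrow> (nat \<Rightarrow> real) \<Rightarrow> (nat \<Rightarrow> real) \<Rightarrow> (nat \<Rightarrow> nat) \<Rightarrow> nat \<Rightarrow> nat \<Rightarrow> real" where
  "omega tmax \<alpha> p ts k n =
     (if n \<le> k \<and> k \<le> n + tmax
      then \<alpha> (k - n) * ((if ts n = k - n then 1 else 0) - p (k - n)) else 0)"

(* prefix [u(0),...,u(k-1)] of the closed-loop signal
   u(k) = sum_{n=0}^k g(n) [v(k-n) - d(k-n)],  d(j) = sum_{i=0}^tau W(j,j-i) u(j-i),
   with zero initial conditions (signals vanish at negative times) and g(0) = 0 *)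
primrec cl_prefix :: "(nat \<Rightarrow> real) \<Rightarrow> nat \<Rightarrow> (nat \<Rightarrow> nat \<Rightarrow> real) \<Rightarrow> (nat \<Rightarrow> real)
    \<Rightarrow> nat \<Rightarrow> real list" where
  "cl_prefix g tmax W v 0 = []"
| "cl_prefix g tmax W v (Suc k) =
     (let us = cl_prefix g tmax W v k;
          d = (\<lambda>j. \<Sum>i\<le>min j tmax. W j (j - i) * us ! (j - i))
      in us @ [\<Sum>n\<in>{1..k}. g n * (v (k - n) - d (k - n))])"

definition cl_u :: "(nat \<Rightarrow> real) \<Rightarrow> nat \<Rightarrow> (nat \<Rightarrow> nat \<Rightarrow> real) \<Rightarrow> (nat \<Rightarrow> real) \<Rightarrow> nat \<Rightarrow> real" where
  "cl_u g tmax W v k = cl_prefix g tmax W v (Suc k) ! k"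

definition cl_d :: "(nat \<Rightarrow> real) \<Rightarrow> nat \<Rightarrow> (nat \<Rightarrow> nat \<Rightarrow> real) \<Rightarrow> (nat \<Rightarrow> real) \<Rightarrow> nat \<Rightarrow> real" where
  "cl_d g tmax W v k = (\<Sum>i\<le>min k tmax. W k (k - i) * cl_u g tmax W v (k - i))"

(* canonical sample space: a realisation of the delay sequence and of the input sequence;
   every joint law of ({tau_n},{v(k)}) is realisable on this type *)
type_synonym sample = "(nat \<Rightarrow> nat) \<times> (nat \<Rightarrow> real)"

definition admissible :: "sample measure \<Rightarrow> nat \<Rightarrow> (nat \<Rightarrow> real)
    \<Rightarrow> (nat \<Rightarrow> sample \<Rightarrow> nat) \<Rightarrow> (nat \<Rightarrow> sample \<Rightarrow> real) \<Rightarrow> bool" where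
  "admissible M tmax p ts v \<longleftrightarrow>
     prob_space M \<and>
     (\<forall>n. ts n \<in> measurable M (count_space UNIV)) \<and>
     prob_space.indep_vars M (\<lambda>_. count_space UNIV) ts UNIV \<and>
     (\<forall>n. AE x in M. ts n x \<le> tmax) \<and>
     (\<forall>n i. i \<le> tmax \<longrightarrow> measure M {x \<in> space M. ts n x = i} = p i) \<and>
     (\<forall>k. v k \<in> borel_measurable M) \<and>
     prob_space.indep_var M
        (PiM UNIV (\<lambda>_. count_space UNIV)) (\<lambda>x n. ts n x)
        (PiM UNIV (\<lambda>_. borel)) (\<lambda>x k. v k x) \<and>
     (\<forall>k. integrable M (\<lambda>x. (v k x)\<^sup>2)) \<and>
     (\<forall>k. (\<integral>x. v k x \<partial>M) = 0) \<and>
     (\<forall>k l. k \<noteq> l \<longrightarrow> (\<integral>x. v k x * v l x \<partial>M) = 0) \<and>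
     (\<exists>B. \<forall>k. (\<integral>x. (v k x)\<^sup>2 \<partial>M) \<le> B)"

definition ms_stable :: "nat \<Rightarrow> (nat \<Rightarrow> real) \<Rightarrow> (nat \<Rightarrow> real)
    \<Rightarrow> (complex \<Rightarrow> complex) \<Rightarrow> (nat \<Rightarrow> real) \<Rightarrow> bool" where
  "ms_stable tmax \<alpha> p G g \<longleftrightarrow>
     stable_tf G \<and>
     (\<forall>(M :: sample measure) ts v. admissible M tmax p ts v \<longrightarrow>
        (let u = (\<lambda>k x. cl_u g tmax (omega tmax \<alpha> p (\<lambda>n. ts n x)) (\<lambda>k. v k x) k);
             d = (\<lambda>k x. cl_d g tmax (omega tmax \<alpha> p (\<lambda>n. ts n x)) (\<lambda>k. v k x) k)
         in (\<forall>k. integrable M (\<lambda>x. (u k x)\<^sup>2) \<and> integrable M (\<lambda>x. (d k x)\<^sup>2)) \<and>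
            (\<exists>B. \<forall>k. (\<integral>x. (u k x)\<^sup>2 \<partial>M) \<le> B \<and> (\<integral>x. (d k x)\<^sup>2 \<partial>M) \<le> B)))"

definition gz :: "(nat \<Rightarrow> real) \<Rightarrow> int \<Rightarrow> real" where
  "gz g m = (if m < 0 then 0 else g (nat m))"

definition That :: "nat \<Rightarrow> (nat \<Rightarrow> real) \<Rightarrow> (nat \<Rightarrow> real) \<Rightarrow> (nat \<Rightarrow> real) \<Rightarrow> nat \<Rightarrow> real" where
  "That tmax \<alpha> p g m = 1/2 * (\<Sum>i1\<le>tmax. \<Sum>i2\<le>tmax.
      (gz g (int m - int i1) * \<alpha> i1 - gz g (int m - int i2) * \<alpha> i2)\<^sup>2 * p i1 * p i2)"

function Shat :: "nat \<Rightarrow> (nat \<Rightarrow> real) \<Rightarrow> (nat \<Rightarrow> real) \<Rightarrow> (nat \<Rightarrow> real) \<Rightarrow> nat \<Rightarrow> real" where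
  "Shat tmax \<alpha> p g m =
     (if m = 0 then 1 else (\<Sum>n<m. Shat tmax \<alpha> p g n * That tmax \<alpha> p g (m - n)))"
  by pat_completeness auto
termination by (relation "Wellfounded.measure (\<lambda>(_, _, _, _, m). m)") auto

end

theory Submission
  imports Defs "HOL-Complex_Analysis.Complex_Analysis"
begin

lemma cl_prefix_len[simp]: "length (cl_prefix g tmax W v k) = k"
  by (induction k) (auto simp: Let_def)

lemma cl_prefix_nth: "m < k \<Longrightarrow> cl_prefix g tmax W v k ! m = cl_u g tmax W v m"
proof (induction k)
  case 0 then show ?case by simp
next
  case (Suc k)
  show ?case
  proof (cases "m = k")
    case True then show ?thesis by (simp add: cl_u_def)
  next
    case False
    then have "m < k" using Suc by simp
    then show ?thesis using Suc by (simp add: Let_def nth_append)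
  qed
qed

lemma cl_u_eq: "cl_u g tmax W v k = (\<Sum>n\<in>{1..k}. g n * (v (k - n) -
      (\<Sum>i\<le>min (k - n) tmax. W (k - n) (k - n - i) * cl_u g tmax W v (k - n - i))))"
proof -
  have "cl_u g tmax W v k = (\<Sum>n\<in>{1..k}. g n * (v (k - n) -
      (\<Sum>i\<le>min (k - n) tmax. W (k - n) (k - n - i) * cl_prefix g tmax W v k ! (k - n - i))))"
    by (simp add: cl_u_def Let_def nth_append)
  show ?thesis
    unfolding cl_u_def[of g tmax W v k]
    apply (simp add: Let_def nth_append)
    apply (intro sum.cong refl arg_cong2[where f="(*)"] arg_cong2[where f="(-)"])
    apply (subst cl_prefix_nth; auto)
    done
qed

lemma sum_reindex_tri:
  fixes F :: "nat \<Rightarrow> nat \<Rightarrow> real"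
  shows "(\<Sum>n\<in>{1..k}. \<Sum>i\<le>min (k-n) T. F n i) = (\<Sum>m<k. \<Sum>i\<le>T. if m+i<k then F (k-m-i) i else 0)"
proof -
  have L: "(\<Sum>n\<in>{1..k}. \<Sum>i\<le>min (k-n) T. F n i) = (\<Sum>(n,i)\<in>Sigma {1..k} (\<lambda>n. {..min (k-n) T}). F n i)"
    by (simp add: sum.Sigma)
  have R: "(\<Sum>m<k. \<Sum>i\<le>T. if m+i<k then F (k-m-i) i else 0)
      = (\<Sum>(m,i)\<in>Sigma {..<k} (\<lambda>m. {i. i \<le> T \<and> m+i<k}). F (k-m-i) i)"
  proof -
    have "\<And>m. (\<Sum>i\<le>T. if m+i<k then F (k-m-i) i else 0) = (\<Sum>i\<in>{i. i \<le> T \<and> m+i<k}. F (k-m-i) i)"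
    proof -
      fix m
      have "{i. i \<le> T \<and> m+i<k} = {i\<in>{..T}. m+i<k}" by auto
      then show "(\<Sum>i\<le>T. if m+i<k then F (k-m-i) i else 0) = (\<Sum>i\<in>{i. i \<le> T \<and> m+i<k}. F (k-m-i) i)"
        by (simp only: sum.inter_filter[OF finite_atMost])
    qed
    then show ?thesis by (simp add: sum.Sigma)
  qed
  show ?thesis unfolding L R
    apply (rule sum.reindex_bij_witness[where i="\<lambda>(m,i). (k-m-i,i)" and j="\<lambda>(n,i). (k-n-i,i)"])
    apply auto
    done
qed

definition Xf :: "nat \<Rightarrow> (nat \<Rightarrow> real) \<Rightarrow> (nat \<Rightarrow> real) \<Rightarrow> (nat \<Rightarrow> real) \<Rightarrow> nat \<Rightarrow> nat \<Rightarrow> nat \<Rightarrow> real" where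
  "Xf tmax \<alpha> p g k m t = (\<Sum>i\<le>tmax. gz g (int k - int m - int i) * \<alpha> i * ((if t = i then 1 else 0) - p i))"

lemma gz_if: assumes g0: "g 0 = 0" shows "gz g (int k - int m - int i) = (if m + i < k then g (k - m - i) else 0)"
proof (cases "m + i < k")
  case True
  then have "nat (int k - int m - int i) = k - m - i" "\<not> (int k - int m - int i < 0)" by auto
  then show ?thesis using True unfolding gz_def by presburger
next
  case False
  then have "int k - int m - int i \<le> 0" by auto
  then show ?thesis using False unfolding gz_def
    by (cases "int k - int m - int i = 0") (auto simp: g0)
qed


lemma cl_u_explicit:
  assumes g0: "g 0 = 0"
  shows "cl_u g tmax (omega tmax \<alpha> p ts) v k = (\<Sum>n\<in>{1..k}. g n * v (k-n))
     - (\<Sum>m<k. Xf tmax \<alpha> p g k m (ts m) * cl_u g tmax (omega tmax \<alpha> p ts) v m)"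
proof -
  define W where "W = omega tmax \<alpha> p ts"
  define u where "u = cl_u g tmax W v"
  define F where "F = (\<lambda>n i. g n * (W (k - n) (k - n - i) * u (k - n - i)))"
  have 1: "u k = (\<Sum>n\<in>{1..k}. g n * v (k-n)) - (\<Sum>n\<in>{1..k}. \<Sum>i\<le>min (k-n) tmax. F n i)"
    unfolding u_def F_def
    by (subst cl_u_eq) (simp add: right_diff_distrib sum_subtractf sum_distrib_left)
  have 3: "(\<Sum>i\<le>tmax. if m+i<k then F (k-m-i) i else 0) = Xf tmax \<alpha> p g k m (ts m) * u m" if "m < k" for m
    unfolding Xf_def sum_distrib_right
  proof (rule sum.cong[OF refl])
    fix i assume i: "i \<in> {..tmax}"
    show "(if m+i<k then F (k-m-i) i else 0) = gz g (int k - int m - int i) * \<alpha> i * ((if ts m = i then 1 else 0) - p i) * u m"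
    proof (cases "m + i < k")
      case True
      then have e1: "k - (k - m - i) = m + i" and e2: "m + i - i = m" by auto
      have "W (m + i) m = \<alpha> i * ((if ts m = i then 1 else 0) - p i)"
        using i unfolding W_def omega_def by auto
      then show ?thesis using True unfolding F_def e1 e2 gz_if[where g=g, OF g0] by simp
    next
      case False
      then show ?thesis unfolding gz_if[where g=g, OF g0] by simp
    qed
  qed
  show ?thesis
    using 1 unfolding sum_reindex_tri by (simp add: 3 W_def u_def)
qed

lemma inner_delta:
  fixes c p :: "nat \<Rightarrow> real"
  assumes "t \<le> T"
  shows "(\<Sum>i\<le>T. c i * ((if t = i then 1 else 0) - p i)) = c t - (\<Sum>i\<le>T. c i * p i)"
  using assms by (simp add: right_diff_distrib sum_subtractf if_distrib[of "\<lambda>x. c _ * x"] sum.delta cong: if_cong)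

lemma mean_zero_identity:
  fixes c p :: "nat \<Rightarrow> real"
  assumes ps: "(\<Sum>i\<le>T. p i) = 1"
  shows "(\<Sum>t\<le>T. p t * (\<Sum>i\<le>T. c i * ((if t = i then 1 else 0) - p i))) = 0"
proof -
  have "(\<Sum>t\<le>T. p t * (\<Sum>i\<le>T. c i * ((if t = i then 1 else 0) - p i)))
      = (\<Sum>t\<le>T. p t * (c t - (\<Sum>i\<le>T. c i * p i)))"
    by (intro sum.cong refl) (simp add: inner_delta)
  also have "\<dots> = (\<Sum>t\<le>T. p t * c t) - (\<Sum>t\<le>T. p t) * (\<Sum>i\<le>T. c i * p i)"
    by (simp add: right_diff_distrib sum_subtractf sum_distrib_right)
  also have "\<dots> = 0" using ps by (simp add: mult.commute)
  finally show ?thesis .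
qed

lemma var_identity:
  fixes c p :: "nat \<Rightarrow> real"
  assumes ps: "(\<Sum>i\<le>T. p i) = 1"
  shows "(\<Sum>t\<le>T. p t * (\<Sum>i\<le>T. c i * ((if t = i then 1 else 0) - p i))\<^sup>2)
     = 1/2 * (\<Sum>i1\<le>T. \<Sum>i2\<le>T. (c i1 - c i2)\<^sup>2 * p i1 * p i2)"
proof -
  define \<mu> where "\<mu> = (\<Sum>i\<le>T. c i * p i)"
  define Q where "Q = (\<Sum>i\<le>T. p i * (c i)\<^sup>2)"
  have "(\<Sum>t\<le>T. p t * (\<Sum>i\<le>T. c i * ((if t = i then 1 else 0) - p i))\<^sup>2)
      = (\<Sum>t\<le>T. p t * (c t - \<mu>)\<^sup>2)"
    by (intro sum.cong refl) (simp add: inner_delta \<mu>_def)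
  also have "\<dots> = (\<Sum>t\<le>T. p t * (c t)\<^sup>2 - 2 * \<mu> * (c t * p t) + \<mu>\<^sup>2 * p t)"
    by (intro sum.cong refl) (simp add: power2_eq_square algebra_simps)
  also have "\<dots> = Q - 2 * \<mu> * \<mu> + \<mu>\<^sup>2 * (\<Sum>t\<le>T. p t)"
    by (simp add: sum.distrib sum_subtractf sum_distrib_left Q_def \<mu>_def)
  also have "\<dots> = Q - \<mu>\<^sup>2" using ps by (simp add: power2_eq_square)
  finally have L: "(\<Sum>t\<le>T. p t * (\<Sum>i\<le>T. c i * ((if t = i then 1 else 0) - p i))\<^sup>2) = Q - \<mu>\<^sup>2" .
  have "(\<Sum>i1\<le>T. \<Sum>i2\<le>T. (c i1 - c i2)\<^sup>2 * p i1 * p i2)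
     = (\<Sum>i1\<le>T. \<Sum>i2\<le>T. (p i1 * (c i1)\<^sup>2) * p i2 + (p i2 * (c i2)\<^sup>2) * p i1 - 2 * ((c i1 * p i1) * (c i2 * p i2)))"
    by (intro sum.cong refl) (simp add: power2_eq_square algebra_simps)
  also have "\<dots> = Q * (\<Sum>i\<le>T. p i) + Q * (\<Sum>i\<le>T. p i) - 2 * (\<mu> * \<mu>)"
    apply (simp add: sum.distrib sum_subtractf sum_distrib_left sum_distrib_right Q_def \<mu>_def
        sum.swap[of "\<lambda>i1 i2. p i2 * (c i2)\<^sup>2 * p i1"])
    by (intro sum.cong refl) (simp add: mult_ac)
  also have "\<dots> = 2 * (Q - \<mu>\<^sup>2)" using ps by (simp add: power2_eq_square)
  finally show ?thesis using L by simp
qed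

lemma Xf_mean:
  assumes ps: "(\<Sum>i\<le>tmax. p i) = 1"
  shows "(\<Sum>t\<le>tmax. Xf tmax \<alpha> p g k m t * p t) = 0"
proof -
  have "(\<Sum>t\<le>tmax. Xf tmax \<alpha> p g k m t * p t) =
     (\<Sum>t\<le>tmax. p t * (\<Sum>i\<le>tmax. (gz g (int k - int m - int i) * \<alpha> i) * ((if t = i then 1 else 0) - p i)))"
    unfolding Xf_def by (simp add: mult.commute mult.assoc)
  also have "\<dots> = 0" by (rule mean_zero_identity[OF ps])
  finally show ?thesis .
qed

lemma Xf_var:
  assumes ps: "(\<Sum>i\<le>tmax. p i) = 1" and mk: "m \<le> k"
  shows "(\<Sum>t\<le>tmax. (Xf tmax \<alpha> p g k m t)\<^sup>2 * p t) = That tmax \<alpha> p g (k - m)"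
proof -
  have "(\<Sum>t\<le>tmax. (Xf tmax \<alpha> p g k m t)\<^sup>2 * p t) =
     (\<Sum>t\<le>tmax. p t * (\<Sum>i\<le>tmax. (gz g (int k - int m - int i) * \<alpha> i) * ((if t = i then 1 else 0) - p i))\<^sup>2)"
    unfolding Xf_def by (simp add: mult.commute mult.assoc)
  also have "\<dots> = That tmax \<alpha> p g (k - m)"
    unfolding var_identity[OF ps] That_def using mk by (simp add: of_nat_diff)
  finally show ?thesis .
qed

lemma renewal_sums:
  fixes S T :: "nat \<Rightarrow> real"
  assumes S0: "S 0 = 1" and Srec: "\<And>m. m > 0 \<Longrightarrow> S m = (\<Sum>n<m. S n * T (m - n))"
    and Tnn: "\<And>m. 0 \<le> T m" and T0: "T 0 = 0" and Tsum: "T sums \<tau>" and tl: "\<tau> < 1"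
  shows "S sums (1 / (1 - \<tau>))"
proof -
  have conv: "S m = (if m = 0 then 1 else 0) + (\<Sum>i\<le>m. S i * T (m - i))" for m
  proof (cases "m = 0")
    case True then show ?thesis using S0 T0 by simp
  next
    case False
    have "(\<Sum>i\<le>m. S i * T (m - i)) = (\<Sum>i<m. S i * T (m - i)) + S m * T 0"
      by (simp add: lessThan_Suc_atMost[symmetric])
    then show ?thesis using False Srec[of m] T0 by simp
  qed
  have Snn: "0 \<le> S m" for m
  proof (induction m rule: less_induct)
    case (less m)
    show ?case
    proof (cases "m = 0")
      case True then show ?thesis using S0 by simp
    next
      case False
      then show ?thesis using Srec[of m] less Tnn by (auto intro!: sum_nonneg mult_nonneg_nonneg)
    qed
  qed
  have Tle: "(\<Sum>j<N. T j) \<le> \<tau>" for N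
    using sum_le_suminf[of T "{..<N}"] Tsum Tnn by (auto simp: sums_iff)
  have part: "(\<Sum>m<N. S m) \<le> 1 / (1 - \<tau>)" for N
  proof -
    define s where "s = (\<Sum>m<N. S m)"
    have a: "(\<Sum>m<N. (if m = 0 then 1 else 0::real)) \<le> 1"
      by (cases N) (auto simp: sum.lessThan_Suc_shift)
    have "(\<Sum>m<N. \<Sum>i\<le>m. S i * T (m - i)) = (\<Sum>(i,j)\<in>{(i,j). i+j<N}. S i * T j)"
      by (rule sum.triangle_reindex[symmetric])
    also have "\<dots> \<le> (\<Sum>(i,j)\<in>{..<N} \<times> {..<N}. S i * T j)"
      proof (rule sum_mono2)
      show "{(i, j). i + j < N} \<subseteq> {..<N} \<times> {..<N}" by auto
      fix b assume "b \<in> {..<N} \<times> {..<N} - {(i, j). i + j < N}"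
      show "0 \<le> (case b of (i, j) \<Rightarrow> S i * T j)"
        by (cases b) (simp add: Snn Tnn)
    qed simp
    also have "\<dots> = s * (\<Sum>j<N. T j)"
      unfolding s_def by (simp add: sum_product sum.cartesian_product)
    also have "\<dots> \<le> s * \<tau>"
      by (rule mult_left_mono[OF Tle]) (auto simp: s_def intro!: sum_nonneg Snn)
    finally have b: "(\<Sum>m<N. \<Sum>i\<le>m. S i * T (m - i)) \<le> s * \<tau>" .
    have "s = (\<Sum>m<N. (if m = 0 then 1 else 0::real)) + (\<Sum>m<N. \<Sum>i\<le>m. S i * T (m - i))"
      unfolding s_def sum.distrib[symmetric] by (rule sum.cong[OF refl conv])
    then have "s \<le> 1 + s * \<tau>" using a b by linarith
    then have "s * (1 - \<tau>) \<le> 1" by (simp add: algebra_simps)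
    then show ?thesis using tl unfolding s_def by (simp add: field_simps)
  qed
  have sumS: "summable S"
    by (rule summableI_nonneg_bounded[OF Snn part])
  have sumT: "summable T" using Tsum by (simp add: sums_iff)
  have cp: "(\<lambda>k. \<Sum>i\<le>k. S i * T (k - i)) sums (suminf S * suminf T)"
  proof (rule Cauchy_product_sums)
    have "(\<lambda>k. norm (S k)) = S" using Snn by (simp add: fun_eq_iff)
    then show "summable (\<lambda>k. norm (S k))" using sumS by simp
    have "(\<lambda>k. norm (T k)) = T" using Tnn by (simp add: fun_eq_iff)
    then show "summable (\<lambda>k. norm (T k))" using sumT by simp
  qed
  have c1: "(\<lambda>m. (if m = 0 then 1 else 0) + (\<Sum>i\<le>m. S i * T (m - i))) sums (1 + suminf S * suminf T)"
    by (intro sums_add cp) (use sums_single[of 0 "\<lambda>_. 1::real"] in simp)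
  have e: "(\<lambda>m. (if m = 0 then 1 else 0) + (\<Sum>i\<le>m. S i * T (m - i))) = S"
    by (rule ext) (rule conv[symmetric])
  have tT: "suminf T = \<tau>" using Tsum by (rule sums_unique[symmetric])
  have "S sums (1 + suminf S * \<tau>)" using c1 unfolding e tT .
  then have "suminf S = 1 + suminf S * \<tau>" by (rule sums_unique[symmetric])
  then have "suminf S * (1 - \<tau>) = 1" by (simp add: algebra_simps)
  then have "suminf S = 1 / (1 - \<tau>)" using tl by (simp add: field_simps)
  then show ?thesis using summable_sums[OF sumS] by simp
qed

lemma renewal_unbounded:
  fixes U T G :: "nat \<Rightarrow> real"
  assumes Urec: "\<And>k. U k = G k + (\<Sum>m<k. T (k - m) * U m)"
    and Unn: "\<And>k. 0 \<le> U k" and Tnn: "\<And>m. 0 \<le> T m" and T0: "T 0 = 0"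
    and Gge: "\<And>k. n0 \<le> k \<Longrightarrow> \<gamma> \<le> G k" and gpos: "0 < \<gamma>"
    and Tsum: "T sums \<tau>" and tge: "1 \<le> \<tau>"
    and Ub: "\<And>k. U k \<le> B"
  shows False
proof -
  have B0: "0 \<le> B" using Unn[of 0] Ub[of 0] by simp
  define \<epsilon> where "\<epsilon> = \<gamma> / (2 * B + 2)"
  have epos: "0 < \<epsilon>" using gpos B0 by (simp add: \<epsilon>_def)
  have "(\<lambda>n. \<Sum>j<n. T j) \<longlonglongrightarrow> \<tau>" using Tsum by (simp add: sums_def)
  then have "eventually (\<lambda>n. dist (\<Sum>j<n. T j) \<tau> < \<epsilon>) sequentially"
    using epos by (rule tendstoD)
  then obtain N0 where N0: "\<And>n. N0 \<le> n \<Longrightarrow> dist (\<Sum>j<n. T j) \<tau> < \<epsilon>"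
    by (auto simp: eventually_sequentially)
  define J where "J = N0 + 1"
  have J1: "1 \<le> J" by (simp add: J_def)
  define s where "s = (\<Sum>j\<in>{1..J}. T j)"
  have "dist (\<Sum>j<Suc J. T j) \<tau> < \<epsilon>" using N0[of "Suc J"] by (simp add: J_def)
  moreover have "(\<Sum>j<Suc J. T j) = s"
    unfolding s_def using T0 by (simp add: lessThan_Suc_atMost atMost_atLeast0 sum.atLeast_Suc_atMost)
  ultimately have s_ge: "1 - \<epsilon> \<le> s" using tge by (simp add: dist_real_def)
  have s0: "0 \<le> s" unfolding s_def by (intro sum_nonneg Tnn)
  define K0 where "K0 = n0 + J"
  have key: "\<gamma> + (\<Sum>j\<in>{1..J}. T j * U (k - j)) \<le> U k" if k: "K0 \<le> k" for k
  proof -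
    have inj: "inj_on (\<lambda>j. k - j) {1..J}" using k unfolding K0_def by (auto simp: inj_on_def)
    have sub: "(\<lambda>j. k - j) ` {1..J} \<subseteq> {..<k}" using k unfolding K0_def by auto
    have "(\<Sum>j\<in>{1..J}. T j * U (k - j)) = (\<Sum>m\<in>(\<lambda>j. k - j) ` {1..J}. T (k - m) * U m)"
    proof (subst sum.reindex[OF inj], rule sum.cong[OF refl])
      fix j assume "j \<in> {1..J}"
      then have "k - (k - j) = j" using k unfolding K0_def by auto
      then show "T j * U (k - j) = ((\<lambda>m. T (k - m) * U m) \<circ> (\<lambda>j. k - j)) j" by simp
    qed
    also have "\<dots> \<le> (\<Sum>m<k. T (k - m) * U m)"
      by (rule sum_mono2[OF _ sub]) (auto intro!: mult_nonneg_nonneg Tnn Unn)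
    finally show ?thesis using Urec[of k] Gge[of k] k unfolding K0_def by linarith
  qed
  have ind: "\<forall>k. K0 + q * J \<le> k \<longrightarrow> real q * \<gamma> / 2 \<le> U k" for q
  proof (induction q)
    case 0 then show ?case using Unn by simp
  next
    case (Suc q)
    have qB: "real q * \<gamma> / 2 \<le> B" using Suc.IH Ub[of "K0 + q * J"] by fastforce
    show ?case
    proof (intro allI impI)
      fix k assume k: "K0 + Suc q * J \<le> k"
      have "(\<Sum>j\<in>{1..J}. T j * (real q * \<gamma> / 2)) \<le> (\<Sum>j\<in>{1..J}. T j * U (k - j))"
      proof (rule sum_mono)
        fix j assume j: "j \<in> {1..J}"
        then have "K0 + q * J \<le> k - j" using k by auto
        then have "real q * \<gamma> / 2 \<le> U (k - j)" using Suc.IH by blast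
        then show "T j * (real q * \<gamma> / 2) \<le> T j * U (k - j)"
          using Tnn by (rule mult_left_mono)
      qed
      then have "\<gamma> + s * (real q * \<gamma> / 2) \<le> U k"
        using key[of k] k unfolding s_def sum_distrib_right by (simp add: mult.commute) 
      moreover have "(1 - s) * (real q * \<gamma> / 2) \<le> \<epsilon> * B"
      proof (cases "1 - s \<le> 0")
        case True
        then have "(1 - s) * (real q * \<gamma> / 2) \<le> 0"
          using gpos by (intro mult_nonpos_nonneg) auto
        then show ?thesis using epos B0 by (smt (verit) mult_nonneg_nonneg)
      next
        case False
        then show ?thesis using s_ge qB gpos epos
          by (intro mult_mono) auto
      qed
      moreover have "\<epsilon> * B \<le> \<gamma> / 2"
        using B0 gpos unfolding \<epsilon>_def by (simp add: field_simps)
      ultimately show "real (Suc q) * \<gamma> / 2 \<le> U k"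
        by (simp add: algebra_simps) 
    qed
  qed
  define q where "q = nat \<lceil>2 * B / \<gamma>\<rceil> + 1"
  have "2 * B / \<gamma> < real q" unfolding q_def by linarith
  then have "B < real q * \<gamma> / 2" using gpos by (simp add: field_simps)
  moreover have "real q * \<gamma> / 2 \<le> U (K0 + q * J)" using ind by blast
  ultimately show False using Ub[of "K0 + q * J"] by linarith
qed

locale chan =
  fixes tmax :: nat and p :: "nat \<Rightarrow> real"
  assumes p_nonneg: "\<forall>i\<le>tmax. 0 \<le> p i" and p_sum: "(\<Sum>i\<le>tmax. p i) = 1"
begin

definition pd :: "nat \<Rightarrow> real" where "pd i = (if i \<le> tmax then p i else 0)"

lemma pd_nonneg: "0 \<le> pd i" using p_nonneg by (simp add: pd_def)

lemma pd_prob: "(\<integral>\<^sup>+x. ennreal (pd x) \<partial>count_space UNIV) = 1"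
proof -
  have "(\<integral>\<^sup>+x. ennreal (pd x) \<partial>count_space UNIV) = (\<Sum>x\<le>tmax. ennreal (pd x))"
    by (rule nn_integral_count_space') (auto simp: pd_def)
  also have "\<dots> = ennreal (\<Sum>x\<le>tmax. pd x)" by (rule sum_ennreal) (simp add: pd_nonneg)
  also have "(\<Sum>x\<le>tmax. pd x) = 1" using p_sum by (simp add: pd_def)
  finally show ?thesis by simp
qed

definition Pd :: "nat pmf" where "Pd = embed_pmf pd"

lemma pmf_Pd: "pmf Pd i = pd i"
  unfolding Pd_def using pd_nonneg pd_prob by (rule pmf_embed_pmf)

lemma set_Pd: "set_pmf Pd \<subseteq> {..tmax}"
  unfolding Pd_def using pd_nonneg pd_prob by (subst set_embed_pmf) (auto simp: pd_def split: if_splits)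

lemma integral_Pd: "(\<integral>t. (f::nat\<Rightarrow>real) t \<partial>measure_pmf Pd) = (\<Sum>t\<le>tmax. f t * p t)"
  by (subst integral_measure_pmf_real[where A="{..tmax}"]) (use set_Pd in \<open>auto simp: pmf_Pd pd_def\<close>)

definition Cd :: "nat pmf" where "Cd = pmf_of_set {0, 1}"

lemma set_Cd: "set_pmf Cd = {0, 1}" by (simp add: Cd_def)

definition sg :: "nat \<Rightarrow> real" where "sg b = (if b = 0 then -1 else 1)"

lemma integral_Cd: "(\<integral>t. (f::nat\<Rightarrow>real) t \<partial>measure_pmf Cd) = (f 0 + f 1) / 2"
  by (subst integral_measure_pmf_real[where A="{0,1}"]) (auto simp: Cd_def field_simps)

definition Q :: "nat + nat \<Rightarrow> nat pmf" where "Q c = (case c of Inl _ \<Rightarrow> Pd | Inr _ \<Rightarrow> Cd)"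

definition Om :: "(nat + nat \<Rightarrow> nat) measure" where "Om = PiM UNIV (\<lambda>c. measure_pmf (Q c))"

lemma pps: "product_prob_space (\<lambda>c. measure_pmf (Q c))"
  by unfold_locales

lemma prob_Om: "prob_space Om"
  unfolding Om_def by (rule prob_space_PiM) (simp add: measure_pmf.prob_space_axioms)

lemma coord_meas: "(\<lambda>\<zeta>. f (\<zeta> c)) \<in> measurable Om (count_space UNIV)"
proof -
  have "(\<lambda>\<zeta>. \<zeta> c) \<in> measurable Om (measure_pmf (Q c))"
    unfolding Om_def by (rule measurable_component_singleton) simp
  then show ?thesis by (rule measurable_compose) simp
qed

lemma coord_borel: "(\<lambda>\<zeta>. (f::nat \<Rightarrow> real) (\<zeta> c)) \<in> borel_measurable Om"
proof -
  have "(\<lambda>\<zeta>. \<zeta> c) \<in> measurable Om (measure_pmf (Q c))"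
    unfolding Om_def by (rule measurable_component_singleton) simp
  then show ?thesis by (rule measurable_compose) simp
qed

lemma distr_coord: "distr Om (measure_pmf (Q c)) (\<lambda>\<zeta>. \<zeta> c) = measure_pmf (Q c)"
  unfolding Om_def by (rule distr_PiM_component) (auto simp: measure_pmf.prob_space_axioms)

lemma integral_coord: "(\<integral>\<zeta>. (f::nat\<Rightarrow>real) (\<zeta> c) \<partial>Om) = (\<integral>t. f t \<partial>measure_pmf (Q c))"
proof -
  have "(\<integral>t. f t \<partial>measure_pmf (Q c)) = (\<integral>t. f t \<partial>distr Om (measure_pmf (Q c)) (\<lambda>\<zeta>. \<zeta> c))"
    by (simp add: distr_coord)
  also have "\<dots> = (\<integral>\<zeta>. f (\<zeta> c) \<partial>Om)"
    using coord_meas[of "\<lambda>x. x" c] by (subst integral_distr) (auto simp: Om_def)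
  finally show ?thesis by simp
qed

lemma indep_coords: "prob_space.indep_vars Om (\<lambda>c. measure_pmf (Q c)) (\<lambda>c \<zeta>. \<zeta> c) UNIV"
proof -
  interpret prob_space Om by (rule prob_Om)
  show ?thesis
  proof (subst indep_vars_iff_distr_eq_PiM')
    show "random_variable (measure_pmf (Q i)) (\<lambda>\<zeta>. \<zeta> i)" for i
      unfolding Om_def by (rule measurable_component_singleton) simp
    have "distr Om (Pi\<^sub>M UNIV (\<lambda>c. measure_pmf (Q c))) (\<lambda>x. \<lambda>i\<in>UNIV. x i) = Om"
      unfolding Om_def restrict_UNIV by (rule distr_id2) simp
    also have "(\<lambda>i. distr Om (measure_pmf (Q i)) (\<lambda>\<zeta>. \<zeta> i)) = (\<lambda>i. measure_pmf (Q i))"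
      by (simp add: distr_coord)
    then have "Om = (\<Pi>\<^sub>M i\<in>UNIV. distr Om (measure_pmf (Q i)) (\<lambda>\<zeta>. \<zeta> i))"
      unfolding Om_def by simp
    finally show "distr Om (Pi\<^sub>M UNIV (\<lambda>c. measure_pmf (Q c))) (\<lambda>x. \<lambda>i\<in>UNIV. x i) =
        (\<Pi>\<^sub>M i\<in>UNIV. distr Om (measure_pmf (Q i)) (\<lambda>\<zeta>. \<zeta> i))" .
  qed simp
qed

lemma integrable_coord: "integrable Om (\<lambda>\<zeta>. (h::nat\<Rightarrow>real) (\<zeta> c))"
proof -
  have fin: "finite (set_pmf (Q c))"
    using set_Pd by (cases c) (auto simp: Q_def set_Cd intro: finite_subset)
  have "integrable (distr Om (measure_pmf (Q c)) (\<lambda>\<zeta>. \<zeta> c)) h"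
    unfolding distr_coord by (rule integrable_measure_pmf_finite[OF fin])
  then show ?thesis
    using coord_meas[of "\<lambda>x. x" c] by (subst (asm) integrable_distr_eq) (auto simp: Om_def)
qed

lemma split_coord:
  fixes h :: "nat \<Rightarrow> real" and F :: "(nat + nat \<Rightarrow> nat) \<Rightarrow> real"
  assumes F_meas: "F \<in> borel_measurable Om" and F_int: "integrable Om F"
    and F_ind: "\<And>\<zeta> t. F (\<zeta>(c := t)) = F \<zeta>"
  shows "integrable Om (\<lambda>\<zeta>. h (\<zeta> c) * F \<zeta>)"
    and "(\<integral>\<zeta>. h (\<zeta> c) * F \<zeta> \<partial>Om) = (\<integral>t. h t \<partial>measure_pmf (Q c)) * (\<integral>\<zeta>. F \<zeta> \<partial>Om)"
proof -
  interpret prob_space Om by (rule prob_Om)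
  let ?M = "\<lambda>c. measure_pmf (Q c)"
  have iv: "indep_var (PiM {c} ?M) (\<lambda>\<zeta>. restrict \<zeta> {c}) (PiM (UNIV - {c}) ?M) (\<lambda>\<zeta>. restrict \<zeta> (UNIV - {c}))"
    using indep_var_restrict[OF indep_coords, of "{c}" "UNIV - {c}"] by (simp add: restrict_def)
  define Y1 where "Y1 = (\<lambda>w::nat+nat\<Rightarrow>nat. h (w c))"
  define Y2 where "Y2 = (\<lambda>w::nat+nat\<Rightarrow>nat. F (w(c := 0)))"
  have m1: "Y1 \<in> borel_measurable (PiM {c} ?M)"
  proof -
    have "(\<lambda>w. w c) \<in> measurable (PiM {c} ?M) (?M c)"
      by (rule measurable_component_singleton) simp
    then show ?thesis unfolding Y1_def by (rule measurable_compose) simp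
  qed
  have m2: "Y2 \<in> borel_measurable (PiM (UNIV - {c}) ?M)"
  proof -
    have "(\<lambda>w. w(c := 0)) \<in> measurable (PiM (UNIV - {c}) ?M) (PiM UNIV ?M)"
      by (rule measurable_fun_upd[where J="UNIV - {c}"]) auto
    then show ?thesis unfolding Y2_def using F_meas[unfolded Om_def] by (rule measurable_compose)
  qed
  have iv2: "indep_var borel (Y1 \<circ> (\<lambda>\<zeta>. restrict \<zeta> {c})) borel (Y2 \<circ> (\<lambda>\<zeta>. restrict \<zeta> (UNIV - {c})))"
    by (rule indep_var_compose[OF iv m1 m2])
  have e1: "Y1 \<circ> (\<lambda>\<zeta>. restrict \<zeta> {c}) = (\<lambda>\<zeta>. h (\<zeta> c))" by (simp add: Y1_def fun_eq_iff)
  have e2: "Y2 \<circ> (\<lambda>\<zeta>. restrict \<zeta> (UNIV - {c})) = F"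
  proof
    fix \<zeta> :: "nat + nat \<Rightarrow> nat"
    have "(restrict \<zeta> (UNIV - {c}))(c := 0) = \<zeta>(c := 0)" by (auto simp: fun_eq_iff)
    then show "(Y2 \<circ> (\<lambda>\<zeta>. restrict \<zeta> (UNIV - {c}))) \<zeta> = F \<zeta>"
      unfolding Y2_def comp_def by (simp only: F_ind)
  qed
  have iv3: "indep_var borel (\<lambda>\<zeta>. h (\<zeta> c)) borel F" using iv2 unfolding e1 e2 .
  show "integrable Om (\<lambda>\<zeta>. h (\<zeta> c) * F \<zeta>)"
    by (rule indep_var_integrable[OF iv3 integrable_coord F_int])
  show "(\<integral>\<zeta>. h (\<zeta> c) * F \<zeta> \<partial>Om) = (\<integral>t. h t \<partial>measure_pmf (Q c)) * (\<integral>\<zeta>. F \<zeta> \<partial>Om)"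
    by (subst indep_var_lebesgue_integral[OF iv3 integrable_coord F_int]) (simp add: integral_coord)
qed

end

context chan begin

definition L2 :: "((nat + nat \<Rightarrow> nat) \<Rightarrow> real) \<Rightarrow> bool" where
  "L2 f \<longleftrightarrow> f \<in> borel_measurable Om \<and> integrable Om (\<lambda>\<zeta>. (f \<zeta>)\<^sup>2)"

lemma L2_prod: assumes "L2 f" "L2 h" shows "integrable Om (\<lambda>\<zeta>. f \<zeta> * h \<zeta>)"
proof -
  have "integrable Om (\<lambda>\<zeta>. (f \<zeta>)\<^sup>2 + (h \<zeta>)\<^sup>2)" using assms unfolding L2_def by auto
  then show ?thesis
  proof (rule Bochner_Integration.integrable_bound)
    show "(\<lambda>\<zeta>. f \<zeta> * h \<zeta>) \<in> borel_measurable Om" using assms unfolding L2_def by auto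
    show "AE \<zeta> in Om. norm (f \<zeta> * h \<zeta>) \<le> norm ((f \<zeta>)\<^sup>2 + (h \<zeta>)\<^sup>2)"
    proof (rule AE_I2)
      fix \<zeta>
      have "2 * \<bar>f \<zeta>\<bar> * \<bar>h \<zeta>\<bar> \<le> (f \<zeta>)\<^sup>2 + (h \<zeta>)\<^sup>2"
        using sum_squares_bound[of "\<bar>f \<zeta>\<bar>" "\<bar>h \<zeta>\<bar>"] by (simp add: power2_abs)
      moreover have "0 \<le> \<bar>f \<zeta>\<bar> * \<bar>h \<zeta>\<bar>" by simp
      moreover have "0 \<le> (f \<zeta>)\<^sup>2 + (h \<zeta>)\<^sup>2" by simp
      ultimately show "norm (f \<zeta> * h \<zeta>) \<le> norm ((f \<zeta>)\<^sup>2 + (h \<zeta>)\<^sup>2)"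
        unfolding real_norm_def abs_mult by linarith
    qed
  qed
qed

lemma L2_integrable: assumes "L2 f" shows "integrable Om f"
proof -
  interpret prob_space Om by (rule prob_Om)
  have "L2 (\<lambda>_. 1)" unfolding L2_def by simp
  from L2_prod[OF assms this] show ?thesis by simp
qed

lemma L2_bounded: assumes "f \<in> borel_measurable Om" "\<And>\<zeta>. \<bar>f \<zeta>\<bar> \<le> C" shows "L2 f"
proof -
  interpret prob_space Om by (rule prob_Om)
  have "integrable Om (\<lambda>\<zeta>. C\<^sup>2)" by simp
  then have "integrable Om (\<lambda>\<zeta>. (f \<zeta>)\<^sup>2)"
  proof (rule Bochner_Integration.integrable_bound)
    show "(\<lambda>\<zeta>. (f \<zeta>)\<^sup>2) \<in> borel_measurable Om" using assms by auto
    show "AE \<zeta> in Om. norm ((f \<zeta>)\<^sup>2) \<le> norm (C\<^sup>2)"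
    proof (rule AE_I2)
      fix \<zeta> have "\<bar>f \<zeta>\<bar> \<le> \<bar>C\<bar>" using assms(2)[of \<zeta>] by linarith
      then show "norm ((f \<zeta>)\<^sup>2) \<le> norm (C\<^sup>2)" by (simp add: abs_le_square_iff[symmetric])
    qed
  qed
  then show ?thesis using assms unfolding L2_def by simp
qed

lemma L2_add: assumes "L2 f" "L2 h" shows "L2 (\<lambda>\<zeta>. f \<zeta> + h \<zeta>)"
proof -
  have i1: "integrable Om (\<lambda>\<zeta>. (f \<zeta>)\<^sup>2)" and i2: "integrable Om (\<lambda>\<zeta>. (h \<zeta>)\<^sup>2)"
    and m1: "f \<in> borel_measurable Om" and m2: "h \<in> borel_measurable Om"
    using assms unfolding L2_def by auto
  have i3: "integrable Om (\<lambda>\<zeta>. f \<zeta> * h \<zeta>)" by (rule L2_prod[OF assms])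
  have "integrable Om (\<lambda>\<zeta>. (f \<zeta>)\<^sup>2 + (h \<zeta>)\<^sup>2 + 2 * (f \<zeta> * h \<zeta>))"
    by (intro Bochner_Integration.integrable_add integrable_mult_right i1 i2 i3)
  moreover have "(\<lambda>\<zeta>. f \<zeta> + h \<zeta>) \<in> borel_measurable Om" using m1 m2 by (rule borel_measurable_add)
  ultimately show ?thesis unfolding L2_def by (simp add: power2_sum mult.assoc)
qed

lemma L2_scale: assumes "L2 f" shows "L2 (\<lambda>\<zeta>. a * f \<zeta>)"
proof -
  have i1: "integrable Om (\<lambda>\<zeta>. (f \<zeta>)\<^sup>2)" and m1: "f \<in> borel_measurable Om"
    using assms unfolding L2_def by auto
  have "integrable Om (\<lambda>\<zeta>. a\<^sup>2 * (f \<zeta>)\<^sup>2)" by (intro integrable_mult_right i1)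
  moreover have "(\<lambda>\<zeta>. a * f \<zeta>) \<in> borel_measurable Om" using m1 by (rule borel_measurable_times[OF borel_measurable_const])
  ultimately show ?thesis unfolding L2_def by (simp add: power_mult_distrib)
qed

lemma L2_diff: assumes "L2 f" "L2 h" shows "L2 (\<lambda>\<zeta>. f \<zeta> - h \<zeta>)"
  using L2_add[OF assms(1) L2_scale[OF assms(2), of "-1"]] by simp

lemma L2_sum: assumes "\<And>i. i \<in> I \<Longrightarrow> L2 (f i)" shows "L2 (\<lambda>\<zeta>. \<Sum>i\<in>I. f i \<zeta>)"
  using assms
proof (induction I rule: infinite_finite_induct)
  case (infinite A) then show ?case by (simp add: L2_def)
next
  case empty then show ?case by (simp add: L2_def)
next
  case (insert x F) then show ?case by (simp add: L2_add)
qed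

lemma L2_bmult: assumes "L2 f" "b \<in> borel_measurable Om" "\<And>\<zeta>. \<bar>b \<zeta>\<bar> \<le> C"
  shows "L2 (\<lambda>\<zeta>. b \<zeta> * f \<zeta>)"
proof -
  have "integrable Om (\<lambda>\<zeta>. C\<^sup>2 * (f \<zeta>)\<^sup>2)" using assms unfolding L2_def by auto
  then have "integrable Om (\<lambda>\<zeta>. (b \<zeta> * f \<zeta>)\<^sup>2)"
  proof (rule Bochner_Integration.integrable_bound)
    show "(\<lambda>\<zeta>. (b \<zeta> * f \<zeta>)\<^sup>2) \<in> borel_measurable Om" using assms unfolding L2_def
      by (intro borel_measurable_power borel_measurable_times) auto
    show "AE \<zeta> in Om. norm ((b \<zeta> * f \<zeta>)\<^sup>2) \<le> norm (C\<^sup>2 * (f \<zeta>)\<^sup>2)"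
    proof (rule AE_I2)
      fix \<zeta>
      have "(b \<zeta>)\<^sup>2 \<le> C\<^sup>2" using assms(3)[of \<zeta>] by (simp add: abs_le_square_iff[symmetric])
      then have "(b \<zeta>)\<^sup>2 * (f \<zeta>)\<^sup>2 \<le> C\<^sup>2 * (f \<zeta>)\<^sup>2" by (rule mult_right_mono) simp
      then show "norm ((b \<zeta> * f \<zeta>)\<^sup>2) \<le> norm (C\<^sup>2 * (f \<zeta>)\<^sup>2)" by (simp add: power_mult_distrib)
    qed
  qed
  moreover have "(\<lambda>\<zeta>. b \<zeta> * f \<zeta>) \<in> borel_measurable Om"
    using assms unfolding L2_def by (intro borel_measurable_times) auto
  ultimately show ?thesis unfolding L2_def by simp
qed

end

context chan begin

lemma sg_abs: "\<bar>sg b\<bar> = 1" by (simp add: sg_def)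

lemma L2_sgc: "L2 (\<lambda>\<zeta>. sg (\<zeta> c))"
  by (rule L2_bounded[where C=1]) (auto intro: coord_borel simp: sg_abs)

lemma vv_int: "(\<integral>\<zeta>. sg (\<zeta> (Inr a)) * sg (\<zeta> (Inr b)) \<partial>Om) = (if a = b then 1 else 0)"
proof (cases "a = b")
  case True
  interpret prob_space Om by (rule prob_Om)
  have "(\<integral>\<zeta>. sg (\<zeta> (Inr a)) * sg (\<zeta> (Inr b)) \<partial>Om) = (\<integral>\<zeta>. 1 \<partial>Om)"
    by (rule Bochner_Integration.integral_cong) (use True in \<open>auto simp: sg_def\<close>)
  also have "\<dots> = 1" using prob_space by simp
  finally show ?thesis using True by simp
next
  case False
  have "(\<integral>\<zeta>. sg (\<zeta> (Inr a)) * sg (\<zeta> (Inr b)) \<partial>Om)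
      = (\<integral>t. sg t \<partial>measure_pmf (Q (Inr a))) * (\<integral>\<zeta>. sg (\<zeta> (Inr b)) \<partial>Om)"
    by (rule split_coord(2)) (use False in \<open>auto intro: coord_borel integrable_coord\<close>)
  also have "(\<integral>t. sg t \<partial>measure_pmf (Q (Inr a))) = 0"
    by (simp add: Q_def integral_Cd sg_def)
  finally show ?thesis using False by simp
qed

end

locale chan2 = chan +
  fixes \<alpha> g :: "nat \<Rightarrow> real"
  assumes g0: "g 0 = 0"
begin

definition tsO :: "(nat + nat \<Rightarrow> nat) \<Rightarrow> nat \<Rightarrow> nat" where "tsO \<zeta> = (\<lambda>n. \<zeta> (Inl n))"
definition vO :: "(nat + nat \<Rightarrow> nat) \<Rightarrow> nat \<Rightarrow> real" where "vO \<zeta> = (\<lambda>k. sg (\<zeta> (Inr k)))"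
definition uO :: "nat \<Rightarrow> (nat + nat \<Rightarrow> nat) \<Rightarrow> real" where
  "uO k \<zeta> = cl_u g tmax (omega tmax \<alpha> p (tsO \<zeta>)) (vO \<zeta>) k"
definition VO :: "nat \<Rightarrow> (nat + nat \<Rightarrow> nat) \<Rightarrow> real" where
  "VO k \<zeta> = (\<Sum>n\<in>{1..k}. g n * sg (\<zeta> (Inr (k - n))))"
definition XO :: "nat \<Rightarrow> nat \<Rightarrow> (nat + nat \<Rightarrow> nat) \<Rightarrow> real" where
  "XO k m \<zeta> = Xf tmax \<alpha> p g k m (\<zeta> (Inl m))"

lemma uO_expl: "uO k \<zeta> = VO k \<zeta> - (\<Sum>m<k. XO k m \<zeta> * uO m \<zeta>)"
  unfolding uO_def VO_def XO_def
  by (subst cl_u_explicit[where g=g, OF g0]) (simp add: vO_def tsO_def)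

lemma VO_meas: "VO k \<in> borel_measurable Om"
  unfolding VO_def
  by (intro borel_measurable_sum borel_measurable_times borel_measurable_const coord_borel)

lemma XO_meas: "XO k m \<in> borel_measurable Om"
  unfolding XO_def by (rule coord_borel)

lemma uO_meas: "uO k \<in> borel_measurable Om"
proof (induction k rule: less_induct)
  case (less k)
  have "(\<lambda>\<zeta>. VO k \<zeta> - (\<Sum>m<k. XO k m \<zeta> * uO m \<zeta>)) \<in> borel_measurable Om"
    using less by (intro borel_measurable_diff VO_meas borel_measurable_sum borel_measurable_times XO_meas) auto
  then show ?case by (subst (asm) uO_expl[symmetric]) 
qed

lemma VO_ind: "VO k (\<zeta>(Inl j := t)) = VO k \<zeta>"
  unfolding VO_def by simp

lemma uO_ind: "m \<le> j \<Longrightarrow> uO m (\<zeta>(Inl j := t)) = uO m \<zeta>"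
proof (induction m rule: less_induct)
  case (less m)
  have "XO m m' (\<zeta>(Inl j := t)) * uO m' (\<zeta>(Inl j := t)) = XO m m' \<zeta> * uO m' \<zeta>" if "m' < m" for m'
  proof -
    have "uO m' (\<zeta>(Inl j := t)) = uO m' \<zeta>" by (rule less.IH) (use that less.prems in auto)
    moreover have "XO m m' (\<zeta>(Inl j := t)) = XO m m' \<zeta>" using that less by (simp add: XO_def)
    ultimately show ?thesis by simp
  qed
  note eq = this
  have sumeq: "(\<Sum>m'<m. XO m m' (\<zeta>(Inl j := t)) * uO m' (\<zeta>(Inl j := t))) = (\<Sum>m'<m. XO m m' \<zeta> * uO m' \<zeta>)"
    by (rule sum.cong[OF refl], rule eq, simp)
  show ?case
    using uO_expl[of m "\<zeta>(Inl j := t)"] uO_expl[of m \<zeta>] VO_ind[of m \<zeta> j t] sumeq by linarith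
qed

lemma VO_bound: "\<bar>VO k \<zeta>\<bar> \<le> (\<Sum>n\<in>{1..k}. \<bar>g n\<bar>)"
  unfolding VO_def
  by (rule order_trans[OF sum_abs]) (simp add: abs_mult sg_abs)

definition CX :: "nat \<Rightarrow> nat \<Rightarrow> real" where
  "CX k m = (\<Sum>i\<le>tmax. \<bar>gz g (int k - int m - int i) * \<alpha> i\<bar> * (1 + \<bar>p i\<bar>))"

lemma XO_bound: "\<bar>XO k m \<zeta>\<bar> \<le> CX k m"
  unfolding XO_def Xf_def CX_def
proof (rule order_trans[OF sum_abs], rule sum_mono)
  fix i
  have "\<bar>(if \<zeta> (Inl m) = i then 1 else 0) - p i\<bar> \<le> 1 + \<bar>p i\<bar>" by auto
  then show "\<bar>gz g (int k - int m - int i) * \<alpha> i * ((if \<zeta> (Inl m) = i then 1 else 0) - p i)\<bar>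
      \<le> \<bar>gz g (int k - int m - int i) * \<alpha> i\<bar> * (1 + \<bar>p i\<bar>)"
    unfolding abs_mult[of "gz g (int k - int m - int i) * \<alpha> i"] by (rule mult_left_mono) auto
qed

lemma L2_VO: "L2 (VO k)" by (rule L2_bounded[OF VO_meas VO_bound])

lemma L2_uO: assumes ui: "\<And>k. integrable Om (\<lambda>\<zeta>. (uO k \<zeta>)\<^sup>2)" shows "L2 (uO k)"
  unfolding L2_def using uO_meas ui by auto

lemma L2_Y: assumes ui: "\<And>k. integrable Om (\<lambda>\<zeta>. (uO k \<zeta>)\<^sup>2)"
  shows "L2 (\<lambda>\<zeta>. XO k m \<zeta> * uO m \<zeta>)"
  by (rule L2_bmult[OF L2_uO[OF ui] XO_meas XO_bound])

lemma EV2: "(\<integral>\<zeta>. (VO k \<zeta>)\<^sup>2 \<partial>Om) = (\<Sum>n\<in>{1..k}. (g n)\<^sup>2)"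
proof -
  have pw: "(VO k \<zeta>)\<^sup>2 = (\<Sum>n\<in>{1..k}. \<Sum>n'\<in>{1..k}. (g n * g n') * (sg (\<zeta> (Inr (k - n))) * sg (\<zeta> (Inr (k - n')))))" for \<zeta>
    unfolding VO_def power2_eq_square sum_product by (intro sum.cong refl) (simp add: mult_ac)
  have int: "integrable Om (\<lambda>\<zeta>. (g n * g n') * (sg (\<zeta> (Inr a)) * sg (\<zeta> (Inr b))))" for n n' a b
    by (intro integrable_mult_right L2_prod L2_sgc)
  have "(\<integral>\<zeta>. (VO k \<zeta>)\<^sup>2 \<partial>Om) = (\<Sum>n\<in>{1..k}. \<Sum>n'\<in>{1..k}. (g n * g n') * (if k - n = k - n' then 1 else 0))"
  proof -
    have "(\<integral>\<zeta>. (VO k \<zeta>)\<^sup>2 \<partial>Om) = (\<integral>\<zeta>. (\<Sum>n\<in>{1..k}. \<Sum>n'\<in>{1..k}. (g n * g n') * (sg (\<zeta> (Inr (k - n))) * sg (\<zeta> (Inr (k - n'))))) \<partial>Om)"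
      unfolding pw ..
    also have "\<dots> = (\<Sum>n\<in>{1..k}. \<integral>\<zeta>. (\<Sum>n'\<in>{1..k}. (g n * g n') * (sg (\<zeta> (Inr (k - n))) * sg (\<zeta> (Inr (k - n'))))) \<partial>Om)"
      by (rule Bochner_Integration.integral_sum) (intro Bochner_Integration.integrable_sum int)
    also have "\<dots> = (\<Sum>n\<in>{1..k}. \<Sum>n'\<in>{1..k}. \<integral>\<zeta>. (g n * g n') * (sg (\<zeta> (Inr (k - n))) * sg (\<zeta> (Inr (k - n')))) \<partial>Om)"
      by (intro sum.cong refl Bochner_Integration.integral_sum int)
    also have "\<dots> = (\<Sum>n\<in>{1..k}. \<Sum>n'\<in>{1..k}. (g n * g n') * (if k - n = k - n' then 1 else 0))"
      by (simp add: vv_int)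
    finally show ?thesis .
  qed
  also have "\<dots> = (\<Sum>n\<in>{1..k}. \<Sum>n'\<in>{1..k}. if n' = n then (g n)\<^sup>2 else 0)"
    by (intro sum.cong refl) (auto simp: power2_eq_square)
  also have "\<dots> = (\<Sum>n\<in>{1..k}. (g n)\<^sup>2)" by simp
  finally show ?thesis .
qed

lemma X_mean_split:
  assumes Fm: "F \<in> borel_measurable Om" and Fi: "integrable Om F"
    and Find: "\<And>\<zeta> t. F (\<zeta>(Inl m := t)) = F \<zeta>"
  shows "(\<integral>\<zeta>. XO k m \<zeta> * F \<zeta> \<partial>Om) = 0"
proof -
  have "(\<integral>\<zeta>. XO k m \<zeta> * F \<zeta> \<partial>Om) = (\<integral>t. Xf tmax \<alpha> p g k m t \<partial>measure_pmf (Q (Inl m))) * (\<integral>\<zeta>. F \<zeta> \<partial>Om)"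
    unfolding XO_def by (rule split_coord(2)[OF Fm Fi Find])
  also have "(\<integral>t. Xf tmax \<alpha> p g k m t \<partial>measure_pmf (Q (Inl m))) = 0"
    by (simp add: Q_def integral_Pd Xf_mean[OF p_sum])
  finally show ?thesis by simp
qed

lemma X_var_split:
  assumes Fm: "F \<in> borel_measurable Om" and Fi: "integrable Om F"
    and Find: "\<And>\<zeta> t. F (\<zeta>(Inl m := t)) = F \<zeta>" and mk: "m \<le> k"
  shows "(\<integral>\<zeta>. (XO k m \<zeta>)\<^sup>2 * F \<zeta> \<partial>Om) = That tmax \<alpha> p g (k - m) * (\<integral>\<zeta>. F \<zeta> \<partial>Om)"
proof -
  have "(\<integral>\<zeta>. (XO k m \<zeta>)\<^sup>2 * F \<zeta> \<partial>Om) = (\<integral>t. (Xf tmax \<alpha> p g k m t)\<^sup>2 \<partial>measure_pmf (Q (Inl m))) * (\<integral>\<zeta>. F \<zeta> \<partial>Om)"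
    unfolding XO_def by (rule split_coord(2)[OF Fm Fi Find])
  also have "(\<integral>t. (Xf tmax \<alpha> p g k m t)\<^sup>2 \<partial>measure_pmf (Q (Inl m))) = That tmax \<alpha> p g (k - m)"
    by (simp add: Q_def integral_Pd Xf_var[OF p_sum mk])
  finally show ?thesis .
qed

lemma uO_rec:
  assumes ui: "\<And>k. integrable Om (\<lambda>\<zeta>. (uO k \<zeta>)\<^sup>2)"
  shows "(\<integral>\<zeta>. (uO k \<zeta>)\<^sup>2 \<partial>Om) = (\<Sum>n\<in>{1..k}. (g n)\<^sup>2)
           + (\<Sum>m<k. That tmax \<alpha> p g (k - m) * (\<integral>\<zeta>. (uO m \<zeta>)\<^sup>2 \<partial>Om))"
proof -
  define Y where "Y m \<zeta> = XO k m \<zeta> * uO m \<zeta>" for m \<zeta>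
  have LV: "L2 (VO k)" by (rule L2_VO)
  have LU: "L2 (uO m)" for m by (rule L2_uO[OF ui])
  have LY: "L2 (Y m)" for m unfolding Y_def[abs_def] by (rule L2_Y[OF ui])
  have pw: "(uO k \<zeta>)\<^sup>2 = (VO k \<zeta>)\<^sup>2 - 2 * (\<Sum>m<k. VO k \<zeta> * Y m \<zeta>) + (\<Sum>m<k. \<Sum>m'<k. Y m \<zeta> * Y m' \<zeta>)" for \<zeta>
  proof -
    have "uO k \<zeta> = VO k \<zeta> - (\<Sum>m<k. Y m \<zeta>)" unfolding Y_def by (rule uO_expl)
    moreover have "(VO k \<zeta> - (\<Sum>m<k. Y m \<zeta>))\<^sup>2 = (VO k \<zeta>)\<^sup>2 - 2 * (VO k \<zeta> * (\<Sum>m<k. Y m \<zeta>)) + (\<Sum>m<k. Y m \<zeta>) * (\<Sum>m<k. Y m \<zeta>)"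
      by (simp add: power2_eq_square algebra_simps)
    moreover have "VO k \<zeta> * (\<Sum>m<k. Y m \<zeta>) = (\<Sum>m<k. VO k \<zeta> * Y m \<zeta>)" by (rule sum_distrib_left)
    moreover have "(\<Sum>m<k. Y m \<zeta>) * (\<Sum>m<k. Y m \<zeta>) = (\<Sum>m<k. \<Sum>m'<k. Y m \<zeta> * Y m' \<zeta>)" by (rule sum_product)
    ultimately show ?thesis by simp
  qed
  have iVY: "integrable Om (\<lambda>\<zeta>. VO k \<zeta> * Y m \<zeta>)" for m by (rule L2_prod[OF LV LY])
  have iYY: "integrable Om (\<lambda>\<zeta>. Y m \<zeta> * Y m' \<zeta>)" for m m' by (rule L2_prod[OF LY LY])
  have iV2: "integrable Om (\<lambda>\<zeta>. (VO k \<zeta>)\<^sup>2)" using LV unfolding L2_def by simp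
  have I2: "(\<integral>\<zeta>. VO k \<zeta> * Y m \<zeta> \<partial>Om) = 0" for m
  proof -
    have "(\<integral>\<zeta>. VO k \<zeta> * Y m \<zeta> \<partial>Om) = (\<integral>\<zeta>. XO k m \<zeta> * (VO k \<zeta> * uO m \<zeta>) \<partial>Om)"
      unfolding Y_def by (simp add: mult_ac)
    also have "\<dots> = 0"
    proof (rule X_mean_split)
      show "(\<lambda>\<zeta>. VO k \<zeta> * uO m \<zeta>) \<in> borel_measurable Om"
        by (intro borel_measurable_times VO_meas uO_meas)
      show "integrable Om (\<lambda>\<zeta>. VO k \<zeta> * uO m \<zeta>)" by (rule L2_prod[OF LV LU])
      show "VO k (\<zeta>(Inl m := t)) * uO m (\<zeta>(Inl m := t)) = VO k \<zeta> * uO m \<zeta>" for \<zeta> t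
        by (simp only: VO_ind uO_ind[OF order_refl])
    qed
    finally show ?thesis .
  qed
  have Ylt: "(\<integral>\<zeta>. Y m \<zeta> * Y m' \<zeta> \<partial>Om) = 0" if mm: "m < m'" for m m'
  proof -
    have "(\<integral>\<zeta>. Y m \<zeta> * Y m' \<zeta> \<partial>Om) = (\<integral>\<zeta>. XO k m' \<zeta> * (Y m \<zeta> * uO m' \<zeta>) \<partial>Om)"
      unfolding Y_def by (simp add: mult_ac)
    also have "\<dots> = 0"
    proof (rule X_mean_split)
      show "(\<lambda>\<zeta>. Y m \<zeta> * uO m' \<zeta>) \<in> borel_measurable Om"
        unfolding Y_def by (intro borel_measurable_times XO_meas uO_meas)
      show "integrable Om (\<lambda>\<zeta>. Y m \<zeta> * uO m' \<zeta>)" by (rule L2_prod[OF LY LU])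
      show "Y m (\<zeta>(Inl m' := t)) * uO m' (\<zeta>(Inl m' := t)) = Y m \<zeta> * uO m' \<zeta>" for \<zeta> t
      proof -
        have "XO k m (\<zeta>(Inl m' := t)) = XO k m \<zeta>" using mm by (simp add: XO_def)
        moreover have "uO m (\<zeta>(Inl m' := t)) = uO m \<zeta>" using mm by (intro uO_ind) simp
        moreover have "uO m' (\<zeta>(Inl m' := t)) = uO m' \<zeta>" by (intro uO_ind) simp
        ultimately show ?thesis unfolding Y_def by simp
      qed
    qed
    finally show ?thesis .
  qed
  have I3: "(\<integral>\<zeta>. Y m \<zeta> * Y m' \<zeta> \<partial>Om) = (if m' = m then That tmax \<alpha> p g (k - m) * (\<integral>\<zeta>. (uO m \<zeta>)\<^sup>2 \<partial>Om) else 0)"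
    if mk: "m < k" for m m'
  proof (cases "m = m'")
    case True
    have "(\<integral>\<zeta>. Y m \<zeta> * Y m \<zeta> \<partial>Om) = (\<integral>\<zeta>. (XO k m \<zeta>)\<^sup>2 * (uO m \<zeta>)\<^sup>2 \<partial>Om)"
      unfolding Y_def by (simp add: power2_eq_square mult_ac)
    also have "\<dots> = That tmax \<alpha> p g (k - m) * (\<integral>\<zeta>. (uO m \<zeta>)\<^sup>2 \<partial>Om)"
    proof (rule X_var_split)
      show "(\<lambda>\<zeta>. (uO m \<zeta>)\<^sup>2) \<in> borel_measurable Om" by (intro borel_measurable_power uO_meas)
      show "integrable Om (\<lambda>\<zeta>. (uO m \<zeta>)\<^sup>2)" by (rule ui)
      show "(uO m (\<zeta>(Inl m := t)))\<^sup>2 = (uO m \<zeta>)\<^sup>2" for \<zeta> t by (simp only: uO_ind[OF order_refl])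
      show "m \<le> k" using mk by simp
    qed
    finally show ?thesis using True by simp
  next
    case False
    then show ?thesis
    proof (cases "m < m'")
      case True then show ?thesis using Ylt by simp
    next
      case False
      then have "m' < m" using \<open>m \<noteq> m'\<close> by simp
      then show ?thesis using Ylt[of m' m] by (simp add: mult.commute)
    qed
  qed
  have "(\<integral>\<zeta>. (uO k \<zeta>)\<^sup>2 \<partial>Om) = (\<integral>\<zeta>. (VO k \<zeta>)\<^sup>2 - 2 * (\<Sum>m<k. VO k \<zeta> * Y m \<zeta>) + (\<Sum>m<k. \<Sum>m'<k. Y m \<zeta> * Y m' \<zeta>) \<partial>Om)"
    unfolding pw ..
  also have "\<dots> = (\<integral>\<zeta>. (VO k \<zeta>)\<^sup>2 \<partial>Om) - 2 * (\<Sum>m<k. \<integral>\<zeta>. VO k \<zeta> * Y m \<zeta> \<partial>Om)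
      + (\<Sum>m<k. \<Sum>m'<k. \<integral>\<zeta>. Y m \<zeta> * Y m' \<zeta> \<partial>Om)"
    using iV2 iVY iYY
    by (simp add: Bochner_Integration.integral_sum Bochner_Integration.integrable_sum
        Bochner_Integration.integral_add Bochner_Integration.integral_diff)
  also have "\<dots> = (\<Sum>n\<in>{1..k}. (g n)\<^sup>2) + (\<Sum>m<k. That tmax \<alpha> p g (k - m) * (\<integral>\<zeta>. (uO m \<zeta>)\<^sup>2 \<partial>Om))"
    by (simp add: EV2 I2 I3)
  finally show ?thesis .
qed

end

lemma indep_var_distr_transfer:
  assumes N: "prob_space N" and phi: "phi \<in> measurable N S"
    and X: "X \<in> measurable S S1" and Y: "Y \<in> measurable S S2"
    and iv: "prob_space.indep_var N S1 (\<lambda>x. X (phi x)) S2 (\<lambda>x. Y (phi x))"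
  shows "prob_space.indep_var (distr N S phi) S1 X S2 Y"
proof -
  interpret N: prob_space N by (rule N)
  interpret D: prob_space "distr N S phi" by (rule N.prob_space_distr[OF phi])
  have Xc: "(\<lambda>x. X (phi x)) \<in> measurable N S1" using X phi by measurable
  have Yc: "(\<lambda>x. Y (phi x)) \<in> measurable N S2" using Y phi by measurable
  have e: "distr N S1 (\<lambda>x. X (phi x)) \<Otimes>\<^sub>M distr N S2 (\<lambda>x. Y (phi x)) = distr N (S1 \<Otimes>\<^sub>M S2) (\<lambda>x. (X (phi x), Y (phi x)))"
    using iv N.indep_var_distribution_eq by blast
  have XY: "(\<lambda>x. (X x, Y x)) \<in> measurable S (S1 \<Otimes>\<^sub>M S2)" using X Y by measurable
  show ?thesis
  proof (subst D.indep_var_distribution_eq, intro conjI)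
    show "X \<in> measurable (distr N S phi) S1" by (subst measurable_distr_eq1) (rule X)
    show "Y \<in> measurable (distr N S phi) S2" by (subst measurable_distr_eq1) (rule Y)
    have "distr (distr N S phi) S1 X = distr N S1 (\<lambda>x. X (phi x))"
      by (subst distr_distr[OF X phi]) (simp add: comp_def)
    moreover have "distr (distr N S phi) S2 Y = distr N S2 (\<lambda>x. Y (phi x))"
      by (subst distr_distr[OF Y phi]) (simp add: comp_def)
    moreover have "distr (distr N S phi) (S1 \<Otimes>\<^sub>M S2) (\<lambda>x. (X x, Y x)) = distr N (S1 \<Otimes>\<^sub>M S2) (\<lambda>x. (X (phi x), Y (phi x)))"
      by (subst distr_distr[OF XY phi]) (simp add: comp_def)
    ultimately show "distr (distr N S phi) S1 X \<Otimes>\<^sub>M distr (distr N S phi) S2 Y =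
        distr (distr N S phi) (S1 \<Otimes>\<^sub>M S2) (\<lambda>x. (X x, Y x))" using e by simp
  qed
qed

context chan begin

definition phiM :: "(nat + nat \<Rightarrow> nat) \<Rightarrow> sample" where
  "phiM \<zeta> = (\<lambda>n. \<zeta> (Inl n), \<lambda>k. sg (\<zeta> (Inr k)))"

definition SS :: "sample measure" where
  "SS = PiM UNIV (\<lambda>_. count_space UNIV) \<Otimes>\<^sub>M PiM UNIV (\<lambda>_. borel)"

definition MM :: "sample measure" where "MM = distr Om SS phiM"

lemma meas_ts_part: "(\<lambda>\<zeta> n. \<zeta> (Inl n)) \<in> measurable Om (PiM UNIV (\<lambda>_. count_space (UNIV::nat set)))"
  by (rule measurable_PiM_single') (auto intro: coord_meas[of "\<lambda>x. x", simplified])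

lemma meas_v_part: "(\<lambda>\<zeta> k. sg (\<zeta> (Inr k))) \<in> measurable Om (PiM UNIV (\<lambda>_. borel))"
  by (rule measurable_PiM_single') (auto intro: coord_borel)

lemma phiM_meas: "phiM \<in> measurable Om SS"
  unfolding phiM_def SS_def by (rule measurable_Pair[OF meas_ts_part meas_v_part])

lemma prob_MM: "prob_space MM"
  unfolding MM_def by (rule prob_space.prob_space_distr[OF prob_Om phiM_meas])

lemma sets_MM: "sets MM = sets SS" by (simp add: MM_def)

lemma meas_MM_iff: "measurable MM N = measurable SS N"
  unfolding MM_def by (rule measurable_distr_eq1)

lemma integral_MM:
  assumes "f \<in> borel_measurable SS"
  shows "(\<integral>x. f x \<partial>MM) = (\<integral>\<zeta>. (f::sample\<Rightarrow>real) (phiM \<zeta>) \<partial>Om)"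
  unfolding MM_def by (rule integral_distr[OF phiM_meas assms])

lemma integrable_MM:
  assumes "f \<in> borel_measurable SS"
  shows "integrable MM f \<longleftrightarrow> integrable Om (\<lambda>\<zeta>. (f::sample\<Rightarrow>real) (phiM \<zeta>))"
  unfolding MM_def by (rule integrable_distr_eq[OF phiM_meas assms])

lemma indep_tv_Om: "prob_space.indep_var Om (PiM UNIV (\<lambda>_. count_space (UNIV::real set))) (\<lambda>\<zeta> n. real (\<zeta> (Inl n)))
    (PiM UNIV (\<lambda>_. borel)) (\<lambda>\<zeta> k. sg (\<zeta> (Inr k)))"
proof -
  interpret prob_space Om by (rule prob_Om)
  let ?M = "\<lambda>c. measure_pmf (Q c)"
  have iv: "indep_var (PiM (range Inl) ?M) (\<lambda>\<zeta>. restrict \<zeta> (range Inl)) (PiM (range Inr) ?M) (\<lambda>\<zeta>. restrict \<zeta> (range Inr))"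
    by (rule indep_var_restrict[OF indep_coords]) auto
  have m1: "(\<lambda>w n. real (w (Inl n))) \<in> measurable (PiM (range Inl) ?M) (PiM UNIV (\<lambda>_. count_space (UNIV::real set)))"
  proof (rule measurable_PiM_single')
    fix n :: nat
    have "(\<lambda>w. w (Inl n)) \<in> measurable (PiM (range Inl) ?M) (?M (Inl n))"
      by (rule measurable_component_singleton) simp
    then show "(\<lambda>w. real (w (Inl n))) \<in> measurable (PiM (range Inl) ?M) (count_space UNIV)"
      by (rule measurable_compose) simp
  qed auto
  have m2: "(\<lambda>w k. sg (w (Inr k))) \<in> measurable (PiM (range Inr) ?M) (PiM UNIV (\<lambda>_. borel))"
  proof (rule measurable_PiM_single')
    fix k :: nat
    have "(\<lambda>w. w (Inr k)) \<in> measurable (PiM (range Inr) ?M) (?M (Inr k))"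
      by (rule measurable_component_singleton) simp
    then show "(\<lambda>w. sg (w (Inr k))) \<in> borel_measurable (PiM (range Inr) ?M)"
      by (rule measurable_compose) simp
  qed auto
  have iv2: "indep_var (PiM UNIV (\<lambda>_. count_space (UNIV::real set))) ((\<lambda>w n. real (w (Inl n))) \<circ> (\<lambda>\<zeta>. restrict \<zeta> (range Inl)))
      (PiM UNIV (\<lambda>_. borel)) ((\<lambda>w k. sg (w (Inr k))) \<circ> (\<lambda>\<zeta>. restrict \<zeta> (range Inr)))"
    by (rule indep_var_compose[OF iv m1 m2])
  have e1: "(\<lambda>w n. real (w (Inl n))) \<circ> (\<lambda>\<zeta>. restrict \<zeta> (range Inl)) = (\<lambda>\<zeta> n. real (\<zeta> (Inl n)))"
    by (auto simp: fun_eq_iff)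
  have e2: "(\<lambda>w k. sg (w (Inr k))) \<circ> (\<lambda>\<zeta>. restrict \<zeta> (range Inr)) = (\<lambda>\<zeta> k. sg (\<zeta> (Inr k)))"
    by (auto simp: fun_eq_iff)
  show ?thesis using iv2 unfolding e1 e2 .
qed

lemma indep_tv_MM: "prob_space.indep_var MM (PiM UNIV (\<lambda>_. count_space (UNIV::real set))) (\<lambda>x n. real (fst x n))
    (PiM UNIV (\<lambda>_. borel)) (\<lambda>x k. snd x k)"
  unfolding MM_def
proof (rule indep_var_distr_transfer[OF prob_Om phiM_meas])
  show "(\<lambda>x n. real (fst x n)) \<in> measurable SS (PiM UNIV (\<lambda>_. count_space UNIV))"
  proof (rule measurable_PiM_single')
    fix n :: nat
    have "(\<lambda>x. fst x n) \<in> measurable SS (count_space UNIV)"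
      unfolding SS_def by (rule measurable_compose[OF measurable_fst measurable_component_singleton]) simp
    then show "(\<lambda>x. real (fst x n)) \<in> measurable SS (count_space UNIV)"
      by (rule measurable_compose) simp
  qed auto
  show "(\<lambda>x k. snd x k) \<in> measurable SS (PiM UNIV (\<lambda>_. borel))"
    unfolding SS_def by simp
  show "prob_space.indep_var Om (PiM UNIV (\<lambda>_. count_space UNIV)) (\<lambda>x. (\<lambda>n. real (fst (phiM x) n)))
      (PiM UNIV (\<lambda>_. borel)) (\<lambda>x. (\<lambda>k. snd (phiM x) k))"
    using indep_tv_Om by (simp add: phiM_def)
qed

lemma fst_meas: "(\<lambda>x. fst x n) \<in> measurable SS (count_space UNIV)"
  unfolding SS_def by (rule measurable_compose[OF measurable_fst measurable_component_singleton]) simp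

lemma snd_meas: "(\<lambda>x. snd x k) \<in> borel_measurable SS"
  unfolding SS_def by (rule measurable_compose[OF measurable_snd measurable_component_singleton]) simp

lemma distr_MM_fst: "distr MM (count_space UNIV) (\<lambda>x. fst x n) = measure_pmf (Q (Inl n))"
proof -
  have "distr MM (count_space UNIV) (\<lambda>x. fst x n) = distr Om (count_space UNIV) ((\<lambda>x. fst x n) \<circ> phiM)"
    unfolding MM_def by (rule distr_distr[OF fst_meas phiM_meas])
  also have "\<dots> = distr Om (measure_pmf (Q (Inl n))) (\<lambda>\<zeta>. \<zeta> (Inl n))"
    by (rule distr_cong) (auto simp: phiM_def)
  also have "\<dots> = measure_pmf (Q (Inl n))" by (rule distr_coord)
  finally show ?thesis .
qed

lemma indep_ts_MM: "prob_space.indep_vars MM (\<lambda>_. count_space UNIV) (\<lambda>n x. fst x n) UNIV"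
proof -
  interpret prob_space MM by (rule prob_MM)
  show ?thesis
  proof (subst indep_vars_iff_distr_eq_PiM')
    show "random_variable (count_space UNIV) (\<lambda>x. fst x i)" for i
      by (subst meas_MM_iff) (rule fst_meas)
    have m: "(\<lambda>x. \<lambda>i\<in>UNIV. fst x i) \<in> measurable SS (PiM UNIV (\<lambda>_. count_space (UNIV::nat set)))"
      by (rule measurable_restrict) (rule fst_meas)
    have "distr MM (Pi\<^sub>M UNIV (\<lambda>i. count_space UNIV)) (\<lambda>x. \<lambda>i\<in>UNIV. fst x i)
        = distr Om (Pi\<^sub>M UNIV (\<lambda>i. count_space UNIV)) ((\<lambda>x. \<lambda>i\<in>UNIV. fst x i) \<circ> phiM)"
      unfolding MM_def by (rule distr_distr[OF m phiM_meas])
    also have "\<dots> = distr Om (Pi\<^sub>M UNIV (\<lambda>n. measure_pmf (Q (Inl n)))) (\<lambda>\<zeta>. \<lambda>n\<in>UNIV. \<zeta> (Inl n))"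
      by (rule distr_cong) (auto simp: phiM_def intro!: sets_PiM_cong)
    also have "\<dots> = Pi\<^sub>M UNIV (\<lambda>n. measure_pmf (Q (Inl n)))"
      unfolding Om_def by (rule distr_PiM_reindex) (auto simp: measure_pmf.prob_space_axioms)
    also have "\<dots> = (\<Pi>\<^sub>M i\<in>UNIV. distr MM (count_space UNIV) (\<lambda>x. fst x i))"
      by (simp add: distr_MM_fst)
    finally show "distr MM (Pi\<^sub>M UNIV (\<lambda>i. count_space UNIV)) (\<lambda>x. \<lambda>i\<in>UNIV. fst x i) =
        (\<Pi>\<^sub>M i\<in>UNIV. distr MM (count_space UNIV) (\<lambda>x. fst x i))" .
  qed simp
qed

lemma AE_ts_MM: "AE x in MM. fst x n \<le> tmax"
proof -
  have "AE \<zeta> in Om. \<zeta> (Inl n) \<le> tmax"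
    unfolding Om_def
    by (rule AE_PiM_component) (use set_Pd in \<open>auto simp: Q_def measure_pmf.prob_space_axioms intro!: AE_pmfI\<close>)
  then show ?thesis
    unfolding MM_def using fst_meas
    by (subst AE_distr_iff[OF phiM_meas]) (auto simp: phiM_def)
qed

lemma prob_ts_MM: "i \<le> tmax \<Longrightarrow> measure MM {x \<in> space MM. fst x n = i} = p i"
proof -
  assume i: "i \<le> tmax"
  have "measure MM {x \<in> space MM. fst x n = i} = measure (distr MM (count_space UNIV) (\<lambda>x. fst x n)) {i}"
    using fst_meas by (subst measure_distr) (auto simp: meas_MM_iff intro!: arg_cong[where f="measure MM"])
  also have "\<dots> = p i" using i by (simp add: distr_MM_fst Q_def measure_pmf_single pmf_Pd pd_def)
  finally show ?thesis .
qed

lemma v_int_MM: "(\<integral>x. f (snd x k) \<partial>MM) = (\<integral>\<zeta>. (f::real\<Rightarrow>real) (sg (\<zeta> (Inr k))) \<partial>Om)"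
  if "f \<in> borel_measurable borel" for f
  using that snd_meas by (subst integral_MM) (auto simp: phiM_def)

lemma sg_sq: "(sg b)\<^sup>2 = 1" by (simp add: sg_def)

lemma admissible_MM: "admissible MM tmax p (\<lambda>n x. fst x n) (\<lambda>k x. snd x k)"
proof -
  have v2: "(\<integral>x. (snd x k)\<^sup>2 \<partial>MM) = 1" for k
  proof -
    interpret prob_space Om by (rule prob_Om)
    have "(\<integral>x. (snd x k)\<^sup>2 \<partial>MM) = (\<integral>\<zeta>. (sg (\<zeta> (Inr k)))\<^sup>2 \<partial>Om)"
      using snd_meas by (subst integral_MM) (auto simp: phiM_def)
    also have "\<dots> = 1" by (simp add: sg_sq prob_space)
    finally show ?thesis .
  qed
  show ?thesis
    unfolding admissible_def
  proof (intro conjI allI impI)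
    show "prob_space MM" by (rule prob_MM)
    show "(\<lambda>x. fst x n) \<in> MM \<rightarrow>\<^sub>M count_space UNIV" for n by (subst meas_MM_iff) (rule fst_meas)
    show "prob_space.indep_vars MM (\<lambda>_. count_space UNIV) (\<lambda>n x. fst x n) UNIV" by (rule indep_ts_MM)
    show "AE x in MM. fst x n \<le> tmax" for n by (rule AE_ts_MM)
    show "measure MM {x \<in> space MM. fst x n = i} = p i" if "i \<le> tmax" for n i by (rule prob_ts_MM[OF that])
    show "(\<lambda>x. snd x k) \<in> borel_measurable MM" for k by (subst meas_MM_iff) (rule snd_meas)
    show "prob_space.indep_var MM (Pi\<^sub>M UNIV (\<lambda>_. count_space UNIV)) (\<lambda>x xa. real (fst x xa))
        (Pi\<^sub>M UNIV (\<lambda>_. borel)) (\<lambda>x k. snd x k)" by (rule indep_tv_MM)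
    show "integrable MM (\<lambda>x. (snd x k)\<^sup>2)" for k
      using snd_meas by (subst integrable_MM) (auto simp: phiM_def integrable_coord[of "\<lambda>t. (sg t)\<^sup>2"])
    show "(\<integral>x. snd x k \<partial>MM) = 0" for k
    proof -
      have "(\<integral>x. snd x k \<partial>MM) = (\<integral>\<zeta>. sg (\<zeta> (Inr k)) \<partial>Om)"
        using snd_meas by (subst integral_MM) (auto simp: phiM_def)
      also have "\<dots> = 0" by (simp only: integral_coord) (simp add: Q_def integral_Cd sg_def)
      finally show ?thesis .
    qed
    show "(\<integral>x. snd x k * snd x l \<partial>MM) = 0" if "k \<noteq> l" for k l
    proof -
      have "(\<integral>x. snd x k * snd x l \<partial>MM) = (\<integral>\<zeta>. sg (\<zeta> (Inr k)) * sg (\<zeta> (Inr l)) \<partial>Om)"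
        using snd_meas by (subst integral_MM) (auto simp: phiM_def)
      also have "\<dots> = 0" using that by (simp add: vv_int)
      finally show ?thesis .
    qed
    show "\<exists>B. \<forall>k. (\<integral>x. (snd x k)\<^sup>2 \<partial>MM) \<le> B" by (rule exI[of _ 1]) (simp add: v2)
  qed
qed

end

context chan2 begin

lemma That_nonneg: "0 \<le> That tmax \<alpha> p g m"
  unfolding That_def using p_nonneg by (auto intro!: sum_nonneg mult_nonneg_nonneg)

lemma That_0: "That tmax \<alpha> p g 0 = 0"
proof -
  have "gz g (int 0 - int i) = 0" for i using g0 by (simp add: gz_def)
  then show ?thesis unfolding That_def by simp
qed

lemma tau_lt_1:
  assumes ms: "ms_stable tmax \<alpha> p G g"
    and Ts: "(That tmax \<alpha> p g) sums \<tau>"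
    and gnz: "g n0 \<noteq> 0"
  shows "\<tau> < 1"
proof (rule ccontr)
  assume "\<not> \<tau> < 1"
  then have t1: "1 \<le> \<tau>" by simp
  define u where "u = (\<lambda>k x. cl_u g tmax (omega tmax \<alpha> p (\<lambda>n. fst x n)) (\<lambda>k. snd x k) k)"
  from ms admissible_MM have
    A: "(\<forall>k. integrable MM (\<lambda>x. (u k x)\<^sup>2)) \<and> (\<exists>B. \<forall>k. (\<integral>x. (u k x)\<^sup>2 \<partial>MM) \<le> B)"
    unfolding ms_stable_def Let_def u_def by blast
  then obtain B where B: "\<And>k. (\<integral>x. (u k x)\<^sup>2 \<partial>MM) \<le> B" and I: "\<And>k. integrable MM (\<lambda>x. (u k x)\<^sup>2)"
    by blast
  have uphi: "u k (phiM \<zeta>) = uO k \<zeta>" for k \<zeta>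
    by (simp add: u_def uO_def phiM_def tsO_def vO_def)
  have meas: "(\<lambda>x. (u k x)\<^sup>2) \<in> borel_measurable SS" for k
    using borel_measurable_integrable[OF I[of k]] by (simp add: meas_MM_iff)
  have ui: "integrable Om (\<lambda>\<zeta>. (uO k \<zeta>)\<^sup>2)" for k
    using I[of k] by (subst (asm) integrable_MM[OF meas]) (simp add: uphi)
  have Ueq: "(\<integral>x. (u k x)\<^sup>2 \<partial>MM) = (\<integral>\<zeta>. (uO k \<zeta>)\<^sup>2 \<partial>Om)" for k
    by (subst integral_MM[OF meas]) (simp add: uphi)
  define U where "U k = (\<integral>\<zeta>. (uO k \<zeta>)\<^sup>2 \<partial>Om)" for k
  have n0: "1 \<le> n0" using gnz g0 by (cases n0) auto
  show False
  proof (rule renewal_unbounded[where U=U and T="That tmax \<alpha> p g" and G="\<lambda>k. \<Sum>n\<in>{1..k}. (g n)\<^sup>2"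
        and \<gamma>="(g n0)\<^sup>2" and \<tau>=\<tau> and B=B])
    show "U k = (\<Sum>n\<in>{1..k}. (g n)\<^sup>2) + (\<Sum>m<k. That tmax \<alpha> p g (k - m) * U m)" for k
      unfolding U_def by (rule uO_rec[OF ui])
    show "0 \<le> U k" for k unfolding U_def by (rule integral_nonneg_AE) simp
    show "0 \<le> That tmax \<alpha> p g m" for m by (rule That_nonneg)
    show "That tmax \<alpha> p g 0 = 0" by (rule That_0)
    show "(g n0)\<^sup>2 \<le> (\<Sum>n\<in>{1..k}. (g n)\<^sup>2)" if "n0 \<le> k" for k
      by (rule member_le_sum) (use that n0 in auto)
    show "0 < (g n0)\<^sup>2" using gnz by simp
    show "That tmax \<alpha> p g sums \<tau>" by (rule Ts)
    show "1 \<le> \<tau>" by (rule t1)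
    show "U k \<le> B" for k using B[of k] Ueq[of k] by (simp add: U_def)
  qed
qed

end

lemma norm_sq_trig_sum:
  fixes c :: "nat \<Rightarrow> real"
  shows "(cmod (\<Sum>m<N. complex_of_real (c m) * cis (- (real m * t))))\<^sup>2
       = (\<Sum>m<N. \<Sum>n<N. c m * c n * cos (real_of_int (int n - int m) * t))"
proof -
  let ?z = "\<Sum>m<N. complex_of_real (c m) * cis (- (real m * t))"
  have "complex_of_real ((cmod ?z)\<^sup>2) = ?z * cnj ?z" by (rule complex_norm_square)
  also have "\<dots> = (\<Sum>m<N. \<Sum>n<N. complex_of_real (c m * c n) * cis (real_of_int (int n - int m) * t))"
    unfolding cnj_sum sum_product
  proof (intro sum.cong refl)
    fix m n
    have "cis (- (real m * t)) * cnj (cis (- (real n * t))) = cis (real_of_int (int n - int m) * t)"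
      by (simp add: cis_cnj cis_mult algebra_simps)
    then show "complex_of_real (c m) * cis (- (real m * t)) * cnj (complex_of_real (c n) * cis (- (real n * t)))
        = complex_of_real (c m * c n) * cis (real_of_int (int n - int m) * t)"
      by (simp add: mult_ac)
  qed
  finally have "(cmod ?z)\<^sup>2 = Re (\<Sum>m<N. \<Sum>n<N. complex_of_real (c m * c n) * cis (real_of_int (int n - int m) * t))"
    by (metis Re_complex_of_real)
  also have "\<dots> = (\<Sum>m<N. \<Sum>n<N. c m * c n * cos (real_of_int (int n - int m) * t))"
    by (simp add: Re_sum)
  finally show ?thesis .
qed

lemma parseval_finite:
  fixes c :: "nat \<Rightarrow> real"
  shows "((\<lambda>t. (cmod (\<Sum>m<N. complex_of_real (c m) * cis (- (real m * t))))\<^sup>2) has_integral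
           (2 * pi * (\<Sum>m<N. (c m)\<^sup>2))) {-pi..pi}"
proof -
  have "((\<lambda>t. \<Sum>m<N. \<Sum>n<N. c m * c n * cos (real_of_int (int n - int m) * t)) has_integral
          (\<Sum>m<N. \<Sum>n<N. c m * c n * (if int n - int m = 0 then 2 * pi else 0))) {-pi..pi}"
    by (intro has_integral_sum finite_lessThan has_integral_mult_right has_integral_cos_nx)
  also have "(\<Sum>m<N. \<Sum>n<N. c m * c n * (if int n - int m = 0 then 2 * pi else 0)) = (\<Sum>m<N. \<Sum>n<N. if n = m then 2 * pi * (c m)\<^sup>2 else 0)"
    by (intro sum.cong refl) (auto simp: power2_eq_square)
  also have "\<dots> = 2 * pi * (\<Sum>m<N. (c m)\<^sup>2)" by (simp add: sum_distrib_left)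
  finally show ?thesis by (simp add: norm_sq_trig_sum)
qed

lemma abs_le_suminf:
  fixes c :: "nat \<Rightarrow> real"
  assumes "summable (\<lambda>m. \<bar>c m\<bar>)"
  shows "\<bar>c m\<bar> \<le> (\<Sum>m. \<bar>c m\<bar>)"
  using sum_le_suminf[OF assms, of "{m}"] by simp

lemma summable_sq:
  fixes c :: "nat \<Rightarrow> real"
  assumes sc: "summable (\<lambda>m. \<bar>c m\<bar>)"
  shows "summable (\<lambda>m. (c m)\<^sup>2)"
proof (rule summable_comparison_test[OF _ summable_mult[OF sc, of "\<Sum>m. \<bar>c m\<bar>"]])
  show "\<exists>N. \<forall>n\<ge>N. norm ((c n)\<^sup>2) \<le> (\<Sum>m. \<bar>c m\<bar>) * \<bar>c n\<bar>"
  proof (intro exI allI impI)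
    fix n
    have "\<bar>c n\<bar> * \<bar>c n\<bar> \<le> (\<Sum>m. \<bar>c m\<bar>) * \<bar>c n\<bar>"
      by (rule mult_right_mono[OF abs_le_suminf[OF sc]]) simp
    then show "norm ((c n)\<^sup>2) \<le> (\<Sum>m. \<bar>c m\<bar>) * \<bar>c n\<bar>"
      by (simp add: power2_eq_square abs_mult)
  qed
qed

lemma parseval:
  fixes c :: "nat \<Rightarrow> real"
  assumes sc: "summable (\<lambda>m. \<bar>c m\<bar>)"
  shows "((\<lambda>t. (cmod (\<Sum>m. complex_of_real (c m) * cis (- (real m * t))))\<^sup>2) has_integral
           (2 * pi * (\<Sum>m. (c m)\<^sup>2))) {-pi..pi}"
proof -
  define K where "K = (\<Sum>m. \<bar>c m\<bar>)"
  define f where "f N t = (cmod (\<Sum>m<N. complex_of_real (c m) * cis (- (real m * t))))\<^sup>2" for N t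
  define F where "F t = (cmod (\<Sum>m. complex_of_real (c m) * cis (- (real m * t))))\<^sup>2" for t
  have na: "norm (complex_of_real (c m) * cis (- (real m * t))) = \<bar>c m\<bar>" for m t
    by (simp add: norm_mult)
  have sa: "summable (\<lambda>m. norm (complex_of_real (c m) * cis (- (real m * t))))" for t
    unfolding na by (rule sc)
  have fi: "f N integrable_on {-pi..pi}" for N
    unfolding f_def using parseval_finite by blast
  have bound: "norm (f N t) \<le> K\<^sup>2" for N t
  proof -
    have "cmod (\<Sum>m<N. complex_of_real (c m) * cis (- (real m * t))) \<le> (\<Sum>m<N. \<bar>c m\<bar>)"
      by (rule order_trans[OF norm_sum]) (simp add: na)
    also have "\<dots> \<le> K" unfolding K_def by (rule sum_le_suminf[OF sc]) auto
    finally have "cmod (\<Sum>m<N. complex_of_real (c m) * cis (- (real m * t))) \<le> K" .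
    then show ?thesis unfolding f_def by (simp add: power_mono)
  qed
  have conv: "(\<lambda>N. f N t) \<longlonglongrightarrow> F t" for t
  proof -
    have "(\<lambda>N. \<Sum>m<N. complex_of_real (c m) * cis (- (real m * t))) \<longlonglongrightarrow> (\<Sum>m. complex_of_real (c m) * cis (- (real m * t)))"
      by (rule summable_LIMSEQ[OF summable_norm_cancel[OF sa]])
    then show ?thesis unfolding f_def F_def by (intro tendsto_intros)
  qed
  have hi: "(\<lambda>_. K\<^sup>2) integrable_on {-pi..pi}" by (rule integrable_const_ivl)
  note dc = dominated_convergence[where h="\<lambda>_. K\<^sup>2", OF fi hi bound conv]
  have eqf: "(\<lambda>N. integral {-pi..pi} (f N)) = (\<lambda>N. 2 * pi * (\<Sum>m<N. (c m)\<^sup>2))"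
    unfolding f_def by (rule ext) (rule integral_unique[OF parseval_finite])
  have l1: "(\<lambda>N. 2 * pi * (\<Sum>m<N. (c m)\<^sup>2)) \<longlonglongrightarrow> integral {-pi..pi} F"
    using dc(2) unfolding eqf .
  have l2: "(\<lambda>N. 2 * pi * (\<Sum>m<N. (c m)\<^sup>2)) \<longlonglongrightarrow> 2 * pi * (\<Sum>m. (c m)\<^sup>2)"
    by (intro tendsto_intros summable_LIMSEQ summable_sq[OF sc])
  have "integral {-pi..pi} F = 2 * pi * (\<Sum>m. (c m)\<^sup>2)" by (rule LIMSEQ_unique[OF l1 l2])
  moreover have "(F has_integral integral {-pi..pi} F) {-pi..pi}" by (rule integrable_integral[OF dc(1)])
  ultimately have "(F has_integral 2 * pi * (\<Sum>m. (c m)\<^sup>2)) {-pi..pi}" by simp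
  then show ?thesis unfolding F_def[abs_def] .
qed

lemma eventually_not_in_finite_at:
  fixes a :: "'a::t1_space"
  assumes "finite X"
  shows "eventually (\<lambda>x. x \<notin> X) (at a)"
proof -
  have "eventually (\<lambda>x. \<forall>y\<in>X. x \<noteq> y) (at a)"
    using assms by (rule eventually_ball_finite) (auto intro: eventually_neq_at_within)
  then show ?thesis by (rule eventually_mono) auto
qed

lemma powser_unique_cofinite:
  fixes d :: "nat \<Rightarrow> complex"
  assumes r: "0 < r" and sm: "\<And>x. norm x < r \<Longrightarrow> summable (\<lambda>n. d n * x ^ n)"
    and X: "finite X" and z: "\<And>x. norm x < r \<Longrightarrow> x \<notin> X \<Longrightarrow> (\<Sum>n. d n * x ^ n) = 0"
  shows "d m = 0"
proof -
  define f where "f x = (\<Sum>n. d n * x ^ n)" for x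
  have sums: "\<And>x. norm x < r \<Longrightarrow> (\<lambda>n. d n * x ^ n) sums f x"
    unfolding f_def using sm by (simp add: summable_sums)
  have lim: "(f \<longlongrightarrow> d 0) (at 0)" by (rule powser_limit_0[OF r sums])
  have ev: "eventually (\<lambda>x. f x = 0) (at 0)"
  proof -
    have "eventually (\<lambda>x. x \<in> ball 0 r) (at (0::complex))"
      using r by (intro eventually_at_in_open') auto
    moreover have "eventually (\<lambda>x. x \<notin> X) (at (0::complex))" by (rule eventually_not_in_finite_at[OF X])
    ultimately show ?thesis by eventually_elim (auto simp: f_def z)
  qed
  have d0: "d 0 = 0"
  proof -
    have "(f \<longlongrightarrow> 0) (at 0)" using ev by (rule tendsto_eventually)
    with lim show ?thesis by (rule tendsto_unique[rotated]) simp
  qed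
  show ?thesis
  proof (rule ccontr)
    assume dm: "d m \<noteq> 0"
    then have m0: "m > 0" using d0 by (cases m) auto
    have f0: "f 0 = 0" using d0 by (simp add: f_def)
    obtain s where s: "0 < s" and nz: "\<And>w. w \<in> cball 0 s - {0} \<Longrightarrow> f w \<noteq> 0"
      using powser_0_nonzero[where r=r and a=d and \<xi>=0 and f=f and m=m] r sums f0 dm m0 by auto
    have "eventually (\<lambda>x. x \<in> ball 0 s) (at (0::complex))"
      using s by (intro eventually_at_in_open') auto
    with ev have "eventually (\<lambda>x. x \<in> ball 0 s \<and> f x = 0) (at (0::complex))"
      by eventually_elim auto
    moreover have "eventually (\<lambda>x. x \<noteq> 0) (at (0::complex))" by (rule eventually_neq_at_within)
    ultimately have "eventually (\<lambda>x. x \<in> ball 0 s \<and> f x = 0 \<and> x \<noteq> 0) (at (0::complex))"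
      by eventually_elim auto
    then obtain x where "x \<in> ball 0 s" "f x = 0" "x \<noteq> 0"
      using eventually_happens'[OF at_neq_bot] by blast
    then show False using nz[of x] by auto
  qed
qed

lemma reflect_ratio:
  fixes N D :: "complex poly"
  assumes dg: "degree N \<le> degree D" and w: "w \<noteq> 0"
  shows "poly N (inverse w) / poly D (inverse w) =
         poly (monom 1 (degree D - degree N) * reflect_poly N) w / poly (reflect_poly D) w"
proof -
  have "poly (monom 1 (degree D - degree N) * reflect_poly N) w = w ^ (degree D - degree N) * (w ^ degree N * poly N (inverse w))"
    using w by (simp add: poly_monom poly_reflect_poly_nz)
  also have "\<dots> = w ^ degree D * poly N (inverse w)"
    using dg by (simp add: mult.assoc[symmetric] power_add[symmetric])
  finally have 1: "poly (monom 1 (degree D - degree N) * reflect_poly N) w = w ^ degree D * poly N (inverse w)" .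
  have 2: "poly (reflect_poly D) w = w ^ degree D * poly D (inverse w)" using w by (simp add: poly_reflect_poly_nz)
  show ?thesis unfolding 1 2 using w by simp
qed

lemma cis_Arg_finite:
  assumes "finite X"
  shows "finite {\<theta>\<in>{-pi..pi}. cis \<theta> \<in> X}"
proof (rule finite_subset)
  show "finite (insert (-pi) (Arg ` X))" using assms by simp
  show "{\<theta>\<in>{-pi..pi}. cis \<theta> \<in> X} \<subseteq> insert (-pi) (Arg ` X)"
  proof
    fix \<theta> assume th: "\<theta> \<in> {\<theta>\<in>{-pi..pi}. cis \<theta> \<in> X}"
    show "\<theta> \<in> insert (-pi) (Arg ` X)"
    proof (cases "\<theta> = -pi")
      case False
      then have "-pi < \<theta>" "\<theta> \<le> pi" using th by auto
      moreover have "sgn (cis \<theta>) = cis \<theta>" by (simp add: sgn_div_norm)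
      ultimately have "Arg (cis \<theta>) = \<theta>" by (intro cis_Arg_unique) auto
      then show ?thesis using th by force
    qed simp
  qed
qed

lemma tf_series:
  fixes G :: "complex \<Rightarrow> complex" and g :: "nat \<Rightarrow> real"
  assumes st: "stable_tf G" and ir: "impulse_response G g"
  shows "summable (\<lambda>j. \<bar>g j\<bar>)"
    and "\<exists>E. finite E \<and> (\<forall>\<theta>\<in>{-pi..pi} - E. (\<lambda>j. complex_of_real (g j) * cis (- (real j * \<theta>))) sums G (cis \<theta>))"
proof -
  obtain N D :: "complex poly" where D0: "D \<noteq> 0" and dg: "degree N \<le> degree D"
    and Dnz: "\<And>z. 1 \<le> cmod z \<Longrightarrow> poly D z \<noteq> 0" and fin: "finite {z. G z \<noteq> poly N z / poly D z}"
    using st unfolding stable_tf_def by blast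
  define X where "X = {z. G z \<noteq> poly N z / poly D z}"
  obtain R0 where R0: "\<And>z. R0 < cmod z \<Longrightarrow> (\<lambda>j. complex_of_real (g j) * inverse z ^ j) sums G z"
    using ir unfolding impulse_response_def by blast
  define R where "R = max R0 1"
  have R1: "1 \<le> R" by (simp add: R_def)
  have R: "\<And>z. R < cmod z \<Longrightarrow> (\<lambda>j. complex_of_real (g j) * inverse z ^ j) sums G z"
    using R0 by (simp add: R_def)
  define Nr where "Nr = monom 1 (degree D - degree N) * reflect_poly N"
  define Dr where "Dr = reflect_poly D"
  define f where "f w = poly Nr w / poly Dr w" for w
  have fND: "poly N z / poly D z = f (inverse z)" if "z \<noteq> 0" for z
    using reflect_ratio[OF dg, of "inverse z"] that by (simp add: f_def Nr_def Dr_def)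
  have Dr_nz1: "poly Dr w \<noteq> 0" if "cmod w \<le> 1" for w
  proof (cases "w = 0")
    case True then show ?thesis using D0 by (simp add: Dr_def poly_reflect_poly_0)
  next
    case False
    have "1 \<le> cmod (inverse w)" using False that by (simp add: norm_inverse one_le_inverse_iff)
    then have "poly D (inverse w) \<noteq> 0" by (rule Dnz)
    then show ?thesis using False by (simp add: Dr_def poly_reflect_poly_nz)
  qed
  have Dr0: "Dr \<noteq> 0" using Dr_nz1[of 0] by auto
  define Z where "Z = {w. poly Dr w = 0}"
  have Zfin: "finite Z" unfolding Z_def by (rule poly_roots_finite[OF Dr0])
  obtain \<rho> where rho1: "1 < \<rho>" and rhoZ: "\<And>w. cmod w < \<rho> \<Longrightarrow> poly Dr w \<noteq> 0"
  proof (cases "Z = {}")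
    case True then show ?thesis using that[of 2] by (auto simp: Z_def)
  next
    case False
    define \<rho> where "\<rho> = Min (norm ` Z)"
    have "\<rho> \<in> norm ` Z" unfolding \<rho>_def using False Zfin by (intro Min_in) auto
    then obtain w0 where "w0 \<in> Z" "\<rho> = cmod w0" by auto
    then have "1 < \<rho>" using Dr_nz1[of w0] by (force simp: Z_def)
    moreover have "poly Dr w \<noteq> 0" if "cmod w < \<rho>" for w
    proof
      assume "poly Dr w = 0"
      then have "w \<in> Z" by (simp add: Z_def)
      then have "\<rho> \<le> cmod w" unfolding \<rho>_def using Zfin by (intro Min_le) auto
      then show False using that by simp
    qed
    ultimately show ?thesis using that by blast
  qed
  have hol: "f holomorphic_on ball 0 \<rho>"
    unfolding f_def using rhoZ by (intro holomorphic_intros) auto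
  define b where "b n = (deriv ^^ n) f 0 / fact n" for n
  have bs: "(\<lambda>n. b n * w ^ n) sums f w" if "cmod w < \<rho>" for w
    using holomorphic_power_series[OF hol, of w] that by (simp add: b_def)
  have gb: "complex_of_real (g n) = b n" for n
  proof -
    define d where "d n = complex_of_real (g n) - b n" for n
    have r0: "0 < inverse R" using R1 by simp
    have gs: "(\<lambda>n. complex_of_real (g n) * w ^ n) sums G (inverse w)" if "w \<noteq> 0" "cmod w < inverse R" for w
    proof -
      have "inverse (inverse R) < inverse (cmod w)"
        by (rule less_imp_inverse_less) (use that in auto)
      then have "R < cmod (inverse w)" by (simp add: norm_inverse)
      from R[OF this] show ?thesis using that by simp
    qed
    have bs': "(\<lambda>n. b n * w ^ n) sums f w" if "cmod w < inverse R" for w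
    proof (rule bs)
      have "inverse R \<le> 1" using R1 by (simp add: inverse_le_1_iff)
      then show "cmod w < \<rho>" using that rho1 by linarith
    qed
    show ?thesis
    proof -
      have "d n = 0"
      proof (rule powser_unique_cofinite[OF r0 _ _ ])
        show "summable (\<lambda>n. d n * x ^ n)" if "cmod x < inverse R" for x
        proof (cases "x = 0")
          case True then show ?thesis by simp
        next
          case False
          have "(\<lambda>n. complex_of_real (g n) * x ^ n - b n * x ^ n) sums (G (inverse x) - f x)"
            by (intro sums_diff gs bs' False that)
          then show ?thesis by (simp add: d_def algebra_simps sums_summable)
        qed
        show "finite (insert 0 (inverse ` X))" using fin by (simp add: X_def)
        show "(\<Sum>n. d n * x ^ n) = 0" if "cmod x < inverse R" "x \<notin> insert 0 (inverse ` X)" for x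
        proof -
          have x0: "x \<noteq> 0" using that by auto
          have "inverse x \<notin> X" using that(2) by (metis image_eqI inverse_inverse_eq insertCI)
          then have "G (inverse x) = f x" using fND[of "inverse x"] x0 by (simp add: X_def)
          moreover have "(\<lambda>n. complex_of_real (g n) * x ^ n - b n * x ^ n) sums (G (inverse x) - f x)"
            by (intro sums_diff gs bs' x0 that)
          ultimately show ?thesis by (simp add: d_def algebra_simps sums_iff)
        qed
      qed
      then show ?thesis by (simp add: d_def)
    qed
  qed
  define \<rho>' where "\<rho>' = (1 + \<rho>) / 2"
  have r'1: "1 < \<rho>'" "\<rho>' < \<rho>" using rho1 by (auto simp: \<rho>'_def)
  have "summable (\<lambda>n. b n * complex_of_real \<rho>' ^ n)"
    using bs[of "complex_of_real \<rho>'"] r'1 by (simp add: sums_summable)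
  then have "summable (\<lambda>n. norm (b n * 1 ^ n))"
    by (rule powser_insidea) (use r'1 in simp)
  then show "summable (\<lambda>j. \<bar>g j\<bar>)" by (simp add: gb[symmetric])
  show "\<exists>E. finite E \<and> (\<forall>\<theta>\<in>{-pi..pi} - E. (\<lambda>j. complex_of_real (g j) * cis (- (real j * \<theta>))) sums G (cis \<theta>))"
  proof (intro exI conjI ballI)
    show "finite {\<theta>\<in>{-pi..pi}. cis \<theta> \<in> X}" by (rule cis_Arg_finite) (simp add: X_def fin)
    fix \<theta> assume th: "\<theta> \<in> {-pi..pi} - {\<theta>\<in>{-pi..pi}. cis \<theta> \<in> X}"
    then have nX: "cis \<theta> \<notin> X" by auto
    have "(\<lambda>n. b n * cis (-\<theta>) ^ n) sums f (cis (-\<theta>))" using rho1 by (intro bs) simp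
    moreover have "f (cis (-\<theta>)) = G (cis \<theta>)"
    proof -
      have "inverse (cis \<theta>) = cis (-\<theta>)" by (rule cis_inverse)
      then have "poly N (cis \<theta>) / poly D (cis \<theta>) = f (cis (-\<theta>))" using fND[of "cis \<theta>"] by simp
      then show ?thesis using nX by (simp add: X_def)
    qed
    moreover have "b n * cis (-\<theta>) ^ n = complex_of_real (g n) * cis (- (real n * \<theta>))" for n
    proof -
      have "cis (-\<theta>) ^ n = cis (real n * (-\<theta>))" by (induction n) (simp_all add: cis_mult algebra_simps)
      then show ?thesis by (simp add: gb[symmetric])
    qed
    ultimately show "(\<lambda>j. complex_of_real (g j) * cis (- (real j * \<theta>))) sums G (cis \<theta>)" by simp
  qed
qed

lemma tf_at_inf:
  fixes b a :: "real poly"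
  assumes a0: "a \<noteq> 0" and dg: "degree b \<le> degree a"
  obtains \<psi> where "isCont \<psi> 0" "\<And>w. w \<noteq> 0 \<Longrightarrow> tf b a (inverse w) = \<psi> w"
    and "degree b < degree a \<Longrightarrow> \<psi> 0 = 0"
proof -
  define b' where "b' = map_poly complex_of_real b"
  define a' where "a' = map_poly complex_of_real a"
  have db: "degree b' = degree b" and da: "degree a' = degree a"
    by (simp_all add: b'_def a'_def degree_map_poly)
  have a'0: "a' \<noteq> 0"
  proof
    assume "a' = 0"
    then have "coeff a' n = 0" for n by simp
    then have "coeff a n = 0" for n by (simp add: a'_def coeff_map_poly)
    then have "a = 0" by (simp add: poly_eq_iff)
    then show False using a0 by simp
  qed
  define \<psi> where "\<psi> w = poly (monom 1 (degree a' - degree b') * reflect_poly b') w / poly (reflect_poly a') w" for w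
  have "isCont \<psi> 0"
    unfolding \<psi>_def using a'0 by (intro continuous_intros) (simp add: poly_reflect_poly_0)
  moreover have "tf b a (inverse w) = \<psi> w" if "w \<noteq> 0" for w
    unfolding tf_def \<psi>_def b'_def[symmetric] a'_def[symmetric]
    by (rule reflect_ratio) (use dg db da that in auto)
  moreover have "\<psi> 0 = 0" if "degree b < degree a"
    using that db da by (simp add: \<psi>_def poly_monom)
  ultimately show ?thesis using that by blast
qed

lemma g0_zero:
  assumes aP: "aP \<noteq> 0" "degree bP < degree aP" and aK: "aK \<noteq> 0" "degree bK \<le> degree aK"
    and ir: "impulse_response (nominal (tf bP aP) (tf bK aK) (mean_channel tmax \<alpha> p)) g"
  shows "g 0 = 0"
proof -
  define G where "G = nominal (tf bP aP) (tf bK aK) (mean_channel tmax \<alpha> p)"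
  obtain R0 where R0: "\<And>z. R0 < cmod z \<Longrightarrow> (\<lambda>j. complex_of_real (g j) * inverse z ^ j) sums G z"
    using ir unfolding impulse_response_def G_def by blast
  define R where "R = max R0 1"
  have R1: "1 \<le> R" by (simp add: R_def)
  have lim1: "((\<lambda>w. G (inverse w)) \<longlongrightarrow> complex_of_real (g 0)) (at 0)"
  proof (rule powser_limit_0_strong[where s="inverse R"])
    show "0 < inverse R" using R1 by simp
    fix w :: complex assume w: "w \<noteq> 0" "cmod w < inverse R"
    have "inverse (inverse R) < inverse (cmod w)"
      by (rule less_imp_inverse_less) (use w in auto)
    then have "R0 < cmod (inverse w)" by (simp add: norm_inverse R_def)
    from R0[OF this] show "(\<lambda>n. complex_of_real (g n) * w ^ n) sums G (inverse w)" by simp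
  qed
  obtain \<psi>P where P1: "isCont \<psi>P 0" and P2: "\<And>w. w \<noteq> 0 \<Longrightarrow> tf bP aP (inverse w) = \<psi>P w"
    and P3': "degree bP < degree aP \<Longrightarrow> \<psi>P 0 = 0"
    by (rule tf_at_inf[OF aP(1) less_imp_le[OF aP(2)]]) blast
  have P3: "\<psi>P 0 = 0" by (rule P3'[OF aP(2)])
  obtain \<psi>K where K1: "isCont \<psi>K 0" and K2: "\<And>w. w \<noteq> 0 \<Longrightarrow> tf bK aK (inverse w) = \<psi>K w"
    by (rule tf_at_inf[OF aK]) blast
  define \<eta> where "\<eta> w = (\<Sum>i\<le>tmax. complex_of_real (\<alpha> i * p i) * w ^ i)" for w
  have H: "mean_channel tmax \<alpha> p (inverse w) = \<eta> w" for w
    by (simp add: mean_channel_def \<eta>_def)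
  have E1: "isCont \<eta> 0" unfolding \<eta>_def by (intro continuous_intros)
  define \<Psi> where "\<Psi> w = \<psi>P w * \<psi>K w / (1 + \<psi>P w * \<psi>K w * \<eta> w)" for w
  have "isCont \<Psi> 0" unfolding \<Psi>_def using P1 K1 E1 P3 by (intro continuous_intros) auto
  then have "(\<Psi> \<longlongrightarrow> 0) (at 0)" using P3 by (simp add: \<Psi>_def isCont_def)
  moreover have ev: "eventually (\<lambda>w. G (inverse w) = \<Psi> w) (at (0::complex))"
    using eventually_neq_at_within[of 0 0 UNIV]
    by eventually_elim (simp add: \<Psi>_def G_def nominal_def P2 K2 H)
  ultimately have "((\<lambda>w. G (inverse w)) \<longlongrightarrow> 0) (at 0)" by (simp only: tendsto_cong[OF ev])
  with lim1 have "complex_of_real (g 0) = 0" by (rule tendsto_unique[rotated]) simp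
  then show ?thesis by simp
qed

lemma gz_shift: "gz g (int (j + i) - int i) = g j"
  by (simp add: gz_def)

lemma gz_nat[simp]: "gz g (int j) = g j"
  by (simp add: gz_def)

lemma gz_neg: "m < i \<Longrightarrow> gz g (int m - int i) = 0"
  by (simp add: gz_def)

lemma summable_gz_shift:
  assumes "summable (\<lambda>j. \<bar>g j\<bar>)"
  shows "summable (\<lambda>m. \<bar>gz g (int m - int i)\<bar>)"
proof -
  have "summable (\<lambda>m. \<bar>gz g (int (m + i) - int i)\<bar>)" using assms by (simp add: gz_shift)
  then show ?thesis by (rule summable_iff_shift[THEN iffD1])
qed

lemma sums_gz_shift:
  assumes s: "(\<lambda>j. complex_of_real (g j) * cis (- (real j * t))) sums S"
  shows "(\<lambda>m. complex_of_real (gz g (int m - int i)) * cis (- (real m * t))) sums (cis (- (real i * t)) * S)"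
proof -
  define f where "f m = complex_of_real (gz g (int m - int i)) * cis (- (real m * t))" for m
  have "(\<lambda>j. cis (- (real i * t)) * (complex_of_real (g j) * cis (- (real j * t)))) sums (cis (- (real i * t)) * S)"
    by (rule sums_mult[OF s])
  moreover have "f (j + i) = cis (- (real i * t)) * (complex_of_real (g j) * cis (- (real j * t)))" for j
    by (simp add: f_def cis_mult algebra_simps)
  ultimately have "(\<lambda>j. f (j + i)) sums (cis (- (real i * t)) * S)" by simp
  moreover have "(\<Sum>m<i. f m) = 0" by (simp add: f_def gz_neg)
  ultimately have "f sums (cis (- (real i * t)) * S)"
    by (simp add: sums_iff_shift)
  then show ?thesis unfolding f_def .
qed

lemma cnj_poly_real:
  fixes q :: "real poly"
  shows "cnj (poly (map_poly complex_of_real q) z) = poly (map_poly complex_of_real q) (cnj z)"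
  by (induction q) (simp_all add: map_poly_pCons)

lemma phi_norm_sq:
  fixes \<phi> :: "real poly" and \<alpha> p :: "nat \<Rightarrow> real"
  assumes Phi_spec: "\<forall>z::complex. z \<noteq> 0 \<longrightarrow>
        poly (map_poly complex_of_real \<phi>) z * poly (map_poly complex_of_real \<phi>) (inverse z) =
        1/2 * (\<Sum>i1\<le>tmax. \<Sum>i2\<le>tmax.
           (of_real (\<alpha> i1) * z ^ i1 - of_real (\<alpha> i2) * z ^ i2) *
           (of_real (\<alpha> i1) * inverse z ^ i1 - of_real (\<alpha> i2) * inverse z ^ i2) *
           of_real (p i1 * p i2))"
  shows "(cmod (poly (map_poly complex_of_real \<phi>) (cis t)))\<^sup>2 =
     1/2 * (\<Sum>i1\<le>tmax. \<Sum>i2\<le>tmax. (cmod (of_real (\<alpha> i1) * cis t ^ i1 - of_real (\<alpha> i2) * cis t ^ i2))\<^sup>2 * (p i1 * p i2))"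
proof -
  let ?P = "poly (map_poly complex_of_real \<phi>)"
  define z where "z = cis t"
  have z0: "z \<noteq> 0" by (simp add: z_def)
  have iz: "inverse z = cnj z" by (simp add: z_def cis_cnj cis_inverse)
  have "complex_of_real ((cmod (?P z))\<^sup>2) = ?P z * cnj (?P z)" by (rule complex_norm_square)
  also have "\<dots> = ?P z * ?P (inverse z)" by (simp add: cnj_poly_real iz)
  also have "\<dots> = 1/2 * (\<Sum>i1\<le>tmax. \<Sum>i2\<le>tmax.
           (of_real (\<alpha> i1) * z ^ i1 - of_real (\<alpha> i2) * z ^ i2) *
           (of_real (\<alpha> i1) * inverse z ^ i1 - of_real (\<alpha> i2) * inverse z ^ i2) *
           of_real (p i1 * p i2))" using Phi_spec z0 by blast
  also have "\<dots> = complex_of_real (1/2 * (\<Sum>i1\<le>tmax. \<Sum>i2\<le>tmax. (cmod (of_real (\<alpha> i1) * z ^ i1 - of_real (\<alpha> i2) * z ^ i2))\<^sup>2 * (p i1 * p i2)))"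
  proof -
    have "(of_real (\<alpha> i1) * z ^ i1 - of_real (\<alpha> i2) * z ^ i2) *
           (of_real (\<alpha> i1) * inverse z ^ i1 - of_real (\<alpha> i2) * inverse z ^ i2) =
          complex_of_real ((cmod (of_real (\<alpha> i1) * z ^ i1 - of_real (\<alpha> i2) * z ^ i2))\<^sup>2)" for i1 i2
      unfolding complex_norm_square iz by simp
    then show ?thesis by simp
  qed
  finally show ?thesis unfolding z_def of_real_eq_iff .
qed

lemma h2_That:
  fixes \<phi> :: "real poly" and \<alpha> p g :: "nat \<Rightarrow> real" and G :: "complex \<Rightarrow> complex"
  assumes st: "stable_tf G" and ir: "impulse_response G g"
  assumes Phi_spec: "\<forall>z::complex. z \<noteq> 0 \<longrightarrow>
        poly (map_poly complex_of_real \<phi>) z * poly (map_poly complex_of_real \<phi>) (inverse z) =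
        1/2 * (\<Sum>i1\<le>tmax. \<Sum>i2\<le>tmax.
           (of_real (\<alpha> i1) * z ^ i1 - of_real (\<alpha> i2) * z ^ i2) *
           (of_real (\<alpha> i1) * inverse z ^ i1 - of_real (\<alpha> i2) * inverse z ^ i2) *
           of_real (p i1 * p i2))"
  shows "(That tmax \<alpha> p g) sums (h2norm (\<lambda>z. poly (map_poly complex_of_real \<phi>) (inverse z) * G z))\<^sup>2"
proof -
  let ?P = "poly (map_poly complex_of_real \<phi>)"
  have sg: "summable (\<lambda>j. \<bar>g j\<bar>)" by (rule tf_series(1)[OF st ir])
  obtain E where Efin: "finite E"
    and Es: "\<And>\<theta>. \<theta> \<in> {-pi..pi} - E \<Longrightarrow> (\<lambda>j. complex_of_real (g j) * cis (- (real j * \<theta>))) sums G (cis \<theta>)"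
    using tf_series(2)[OF st ir] by blast
  define c where "c i1 i2 m = gz g (int m - int i1) * \<alpha> i1 - gz g (int m - int i2) * \<alpha> i2" for i1 i2 m
  define F where "F i1 i2 \<theta> = (cmod (\<Sum>m. complex_of_real (c i1 i2 m) * cis (- (real m * \<theta>))))\<^sup>2" for i1 i2 \<theta>
  have cs: "summable (\<lambda>m. \<bar>c i1 i2 m\<bar>)" for i1 i2
  proof (rule summable_comparison_test[OF _ summable_add[OF summable_mult2[OF summable_gz_shift[OF sg, of i1], of "\<bar>\<alpha> i1\<bar>"]
        summable_mult2[OF summable_gz_shift[OF sg, of i2], of "\<bar>\<alpha> i2\<bar>"]]])
    show "\<exists>N. \<forall>n\<ge>N. norm \<bar>c i1 i2 n\<bar> \<le> \<bar>gz g (int n - int i1)\<bar> * \<bar>\<alpha> i1\<bar> + \<bar>gz g (int n - int i2)\<bar> * \<bar>\<alpha> i2\<bar>"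
      by (auto simp: c_def abs_mult[symmetric] intro!: abs_triangle_ineq4)
  qed
  have Fint: "(F i1 i2 has_integral (2 * pi * (\<Sum>m. (c i1 i2 m)\<^sup>2))) {-pi..pi}" for i1 i2
    unfolding F_def by (rule parseval[OF cs])
  define S where "S = 1/2 * (\<Sum>i1\<le>tmax. \<Sum>i2\<le>tmax. (\<Sum>m. (c i1 i2 m)\<^sup>2) * (p i1 * p i2))"
  have Iint: "((\<lambda>\<theta>. 1/2 * (\<Sum>i1\<le>tmax. \<Sum>i2\<le>tmax. F i1 i2 \<theta> * (p i1 * p i2))) has_integral (2 * pi * S)) {-pi..pi}"
  proof -
    have "((\<lambda>\<theta>. 1/2 * (\<Sum>i1\<le>tmax. \<Sum>i2\<le>tmax. F i1 i2 \<theta> * (p i1 * p i2))) has_integral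
        (1/2 * (\<Sum>i1\<le>tmax. \<Sum>i2\<le>tmax. (2 * pi * (\<Sum>m. (c i1 i2 m)\<^sup>2)) * (p i1 * p i2)))) {-pi..pi}"
      by (intro has_integral_mult_right has_integral_sum finite_atMost has_integral_mult_left Fint)
    also have "(1/2 * (\<Sum>i1\<le>tmax. \<Sum>i2\<le>tmax. (2 * pi * (\<Sum>m. (c i1 i2 m)\<^sup>2)) * (p i1 * p i2))) = 2 * pi * S"
      unfolding S_def by (simp add: sum_distrib_left mult_ac)
    finally show ?thesis .
  qed
  have pw: "(cmod (?P (inverse (cis \<theta>)) * G (cis \<theta>)))\<^sup>2 = 1/2 * (\<Sum>i1\<le>tmax. \<Sum>i2\<le>tmax. F i1 i2 \<theta> * (p i1 * p i2))"
    if th: "\<theta> \<in> {-pi..pi} - E" for \<theta>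
  proof -
    have inv: "inverse (cis \<theta>) = cis (-\<theta>)" by (rule cis_inverse)
    have cp: "cis (-\<theta>) ^ i = cis (- (real i * \<theta>))" for i
      by (induction i) (simp_all add: cis_mult algebra_simps)
    have wG: "(of_real (\<alpha> i1) * cis (-\<theta>) ^ i1 - of_real (\<alpha> i2) * cis (-\<theta>) ^ i2) * G (cis \<theta>)
        = (\<Sum>m. complex_of_real (c i1 i2 m) * cis (- (real m * \<theta>)))" for i1 i2
    proof -
      have s1: "(\<lambda>m. complex_of_real (gz g (int m - int i1)) * cis (- (real m * \<theta>))) sums (cis (- (real i1 * \<theta>)) * G (cis \<theta>))"
        by (rule sums_gz_shift[OF Es[OF th]])
      have s2: "(\<lambda>m. complex_of_real (gz g (int m - int i2)) * cis (- (real m * \<theta>))) sums (cis (- (real i2 * \<theta>)) * G (cis \<theta>))"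
        by (rule sums_gz_shift[OF Es[OF th]])
      have "(\<lambda>m. of_real (\<alpha> i1) * (complex_of_real (gz g (int m - int i1)) * cis (- (real m * \<theta>)))
            - of_real (\<alpha> i2) * (complex_of_real (gz g (int m - int i2)) * cis (- (real m * \<theta>))))
          sums (of_real (\<alpha> i1) * (cis (- (real i1 * \<theta>)) * G (cis \<theta>)) - of_real (\<alpha> i2) * (cis (- (real i2 * \<theta>)) * G (cis \<theta>)))"
        by (intro sums_diff sums_mult s1 s2)
      then have "(\<lambda>m. complex_of_real (c i1 i2 m) * cis (- (real m * \<theta>)))
          sums ((of_real (\<alpha> i1) * cis (-\<theta>) ^ i1 - of_real (\<alpha> i2) * cis (-\<theta>) ^ i2) * G (cis \<theta>))"
        by (simp add: c_def cp algebra_simps)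
      then show ?thesis by (simp add: sums_iff)
    qed
    have "(cmod (?P (inverse (cis \<theta>)) * G (cis \<theta>)))\<^sup>2 = (cmod (?P (cis (-\<theta>))))\<^sup>2 * (cmod (G (cis \<theta>)))\<^sup>2"
      by (simp add: inv norm_mult power_mult_distrib)
    also have "\<dots> = 1/2 * (\<Sum>i1\<le>tmax. \<Sum>i2\<le>tmax. (cmod (of_real (\<alpha> i1) * cis (-\<theta>) ^ i1 - of_real (\<alpha> i2) * cis (-\<theta>) ^ i2))\<^sup>2 * (p i1 * p i2)) * (cmod (G (cis \<theta>)))\<^sup>2"
      by (simp only: phi_norm_sq[OF Phi_spec])
    also have "\<dots> = 1/2 * (\<Sum>i1\<le>tmax. \<Sum>i2\<le>tmax. (cmod ((of_real (\<alpha> i1) * cis (-\<theta>) ^ i1 - of_real (\<alpha> i2) * cis (-\<theta>) ^ i2) * G (cis \<theta>)))\<^sup>2 * (p i1 * p i2))"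
      by (simp add: sum_distrib_right sum_distrib_left norm_mult power_mult_distrib mult_ac)
    also have "\<dots> = 1/2 * (\<Sum>i1\<le>tmax. \<Sum>i2\<le>tmax. F i1 i2 \<theta> * (p i1 * p i2))"
      by (simp only: wG F_def)
    finally show ?thesis .
  qed
  have Jint: "((\<lambda>\<theta>. (cmod (?P (inverse (cis \<theta>)) * G (cis \<theta>)))\<^sup>2) has_integral (2 * pi * S)) {-pi..pi}"
    by (rule has_integral_spike_finite[OF Efin _ Iint]) (use pw in auto)
  have S0: "0 \<le> S"
  proof -
    have "0 \<le> integral {-pi..pi} (\<lambda>\<theta>. (cmod (?P (inverse (cis \<theta>)) * G (cis \<theta>)))\<^sup>2)"
      by (rule integral_nonneg) (use Jint in auto)
    then have "0 \<le> (2 * pi) * S" using integral_unique[OF Jint] by simp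
    then show ?thesis using pi_gt_zero by (simp add: zero_le_mult_iff)
  qed
  have h2: "(h2norm (\<lambda>z. ?P (inverse z) * G z))\<^sup>2 = S"
    unfolding h2norm_def integral_unique[OF Jint] using S0 by simp
  have "(\<lambda>m. \<Sum>i1\<le>tmax. \<Sum>i2\<le>tmax. 1/2 * ((c i1 i2 m)\<^sup>2 * (p i1 * p i2)))
        sums (\<Sum>i1\<le>tmax. \<Sum>i2\<le>tmax. 1/2 * ((\<Sum>m. (c i1 i2 m)\<^sup>2) * (p i1 * p i2)))"
    by (intro sums_sum sums_mult sums_mult2 summable_sums summable_sq cs)
  moreover have "(\<lambda>m. \<Sum>i1\<le>tmax. \<Sum>i2\<le>tmax. 1/2 * ((c i1 i2 m)\<^sup>2 * (p i1 * p i2))) = That tmax \<alpha> p g"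
    by (rule ext) (simp add: That_def c_def sum_distrib_left mult_ac)
  moreover have "(\<Sum>i1\<le>tmax. \<Sum>i2\<le>tmax. 1/2 * ((\<Sum>m. (c i1 i2 m)\<^sup>2) * (p i1 * p i2))) = S"
    by (simp add: S_def sum_distrib_left)
  ultimately show ?thesis using h2 by simp
qed

theorem lemma10:
  fixes tmax :: nat
    and \<alpha> p :: "nat \<Rightarrow> real"
    and bP aP bK aK :: "real poly"
    and g :: "nat \<Rightarrow> real"
    and \<phi> :: "real poly"
  assumes p_nonneg: "\<forall>i\<le>tmax. 0 \<le> p i"
    and p_sum: "(\<Sum>i\<le>tmax. p i) = 1"
    and P_proper: "aP \<noteq> 0" "degree bP < degree aP"
    and K_proper: "aK \<noteq> 0" "degree bK \<le> degree aK"
    and g_imp: "impulse_response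
                  (nominal (tf bP aP) (tf bK aK) (mean_channel tmax \<alpha> p)) g"
    and Phi_deg: "degree \<phi> = tmax"
    and Phi_minphase: "\<forall>w. poly (map_poly complex_of_real \<phi>) w = 0 \<longrightarrow> 1 < cmod w"
    and Phi_spec: "\<forall>z::complex. z \<noteq> 0 \<longrightarrow>
        poly (map_poly complex_of_real \<phi>) z * poly (map_poly complex_of_real \<phi>) (inverse z) =
        1/2 * (\<Sum>i1\<le>tmax. \<Sum>i2\<le>tmax.
           (of_real (\<alpha> i1) * z ^ i1 - of_real (\<alpha> i2) * z ^ i2) *
           (of_real (\<alpha> i1) * inverse z ^ i1 - of_real (\<alpha> i2) * inverse z ^ i2) *
           of_real (p i1 * p i2))"
    and stable: "ms_stable tmax \<alpha> p
                   (nominal (tf bP aP) (tf bK aK) (mean_channel tmax \<alpha> p)) g"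
  shows "(Shat tmax \<alpha> p g) sums
           (1 / (1 - (h2norm (\<lambda>z. poly (map_poly complex_of_real \<phi>) (inverse z) *
               nominal (tf bP aP) (tf bK aK) (mean_channel tmax \<alpha> p) z))\<^sup>2))
       \<and> h2norm (\<lambda>z. poly (map_poly complex_of_real \<phi>) (inverse z) *
               nominal (tf bP aP) (tf bK aK) (mean_channel tmax \<alpha> p) z) < 1"
  proof -
  define G where "G = nominal (tf bP aP) (tf bK aK) (mean_channel tmax \<alpha> p)"
  define h where "h = h2norm (\<lambda>z. poly (map_poly complex_of_real \<phi>) (inverse z) * G z)"
  have g0: "g 0 = 0" by (rule g0_zero[OF P_proper K_proper g_imp])
  have st: "stable_tf G" using stable unfolding ms_stable_def G_def by blast
  have ir: "impulse_response G g" using g_imp unfolding G_def .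
  have Ts: "That tmax \<alpha> p g sums h\<^sup>2" unfolding h_def by (rule h2_That[OF st ir Phi_spec])
  interpret c2: chan2 tmax p \<alpha> g by unfold_locales (use p_nonneg p_sum g0 in auto)
  have tl: "h\<^sup>2 < 1"
  proof (cases "\<exists>n0. g n0 \<noteq> 0")
    case True
    then obtain n0 where "g n0 \<noteq> 0" by blast
    then show ?thesis using c2.tau_lt_1[OF stable Ts] by blast
  next
    case False
    then have gz0: "\<And>n. g n = 0" by blast
    have gfun: "g = (\<lambda>_. 0)" by (rule ext) (rule gz0)
    have "That tmax \<alpha> p g = (\<lambda>_. 0)" unfolding gfun by (simp add: That_def gz_def fun_eq_iff)
    then have "(\<lambda>_. 0::real) sums h\<^sup>2" using Ts by simp
    then have "h\<^sup>2 = 0" using sums_zero sums_unique2 by blast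
    then show ?thesis by simp
  qed
  have Sh: "Shat tmax \<alpha> p g sums (1 / (1 - h\<^sup>2))"
  proof (rule renewal_sums[OF _ _ c2.That_nonneg c2.That_0 Ts tl])
    show "Shat tmax \<alpha> p g 0 = 1" by (subst Shat.simps) simp
    show "Shat tmax \<alpha> p g m = (\<Sum>n<m. Shat tmax \<alpha> p g n * That tmax \<alpha> p g (m - n))" if "m > 0" for m
      using that by (subst Shat.simps) simp
  qed
  have h0: "0 \<le> h"
  proof -
    let ?F = "\<lambda>\<theta>. (cmod (poly (map_poly complex_of_real \<phi>) (inverse (cis \<theta>)) * G (cis \<theta>)))\<^sup>2"
    have "0 \<le> integral {-pi..pi} ?F"
      by (cases "?F integrable_on {-pi..pi}") (auto intro: integral_nonneg simp: not_integrable_integral)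
    then show ?thesis unfolding h_def h2norm_def by simp
  qed
  have hl: "h < 1"
  proof (rule ccontr)
    assume "\<not> h < 1"
    then have "1 \<le> h" by simp
    then have "1 * 1 \<le> h * h" by (intro mult_mono) auto
    then show False using tl by (simp add: power2_eq_square)
  qed
  show ?thesis using Sh hl unfolding h_def G_def by simp
qed

end
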